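(* Fix a constant $c\ge1$. There is a constant $C>0$ depending only on $c$ such that the following holds for all integers $n\ge3$, $U\ge3$ with $n/c\le U\le cn$. Let $z(0)$ be a row vector indexed by the $2n$ states with nonnegative entries summing to $F>0$, and let $z(t)=z(0)K^t$. Then for every $\epsilon'\in(0,1/2]$ and every $t\ge C\,n\log(n/\epsilon')$, $$|z_x(t)-\pi_xF|\le\frac{\epsilon'}{2n}F\quad\text{for every state }x.$$
   Context: Let $n\ge3$ and $U\ge3$ be integers. The "original chain" is the Markov chain on the $2n$ states $\{1,\dots,n,1',\dots,n'\}$ with the following transition probabilities (all unlisted transitions have probability $0$): for $2\le i\le n-1$: $i\to i$ w.p. $1/2$, $i\to i+1$ w.p. $\frac12(1-\frac1U)$, $i\to(i+1)'$ w.p. $\frac1{2U}$; for $2\le i\le n-1$: $i'\to i'$ w.p. $1/2$, $i'\to(i-1)'$ w.p. $\frac12(1-\frac1U)$, $i'\to i-1$ w.p. $\frac1{2U}$; $1\to2$ w.p. $1-\frac1U$, $1\to2'$ w.p. $\frac1U$; $1'\to1$ w.p. $1-\frac1U$, $1'\to1'$ w.p. $\frac1U$; $n\to n'$ w.p. $1-\frac1U$, $n\to n$ w.p. $\frac1U$; $n'\to(n-1)'$ w.p. $1-\frac1U$, $n'\to n-1$ w.p. $\frac1U$. $K$ is its $2n\times 2n$ row-stochastic transition matrix ($K_{xy}$ = probability of moving from $x$ to $y$), and $\pi$ its unique stationary distribution ($\pi K=\pi$). *)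

theory Defs
  imports Complex_Main
begin

text \<open>States: (i, False) is the unprimed state i, (i, True) is the primed state i', for 1 <= i <= n.\<close>

definition states :: "nat \<Rightarrow> (nat \<times> bool) set" where
  "states n = {1..n} \<times> UNIV"

definition Kmat :: "nat \<Rightarrow> nat \<Rightarrow> (nat \<times> bool) \<Rightarrow> (nat \<times> bool) \<Rightarrow> real" where
  "Kmat n U x y = (let p = 1 / real U; i = fst x in
     if x \<notin> states n then 0
     else if \<not> snd x then
       (if i = 1 then
          (if y = (2, False) then 1 - p else if y = (2, True) then p else 0)
        else if i = n then
          (if y = (n, True) then 1 - p else if y = (n, False) then p else 0)
        else
          (if y = (i, False) then 1/2
           else if y = (i + 1, False) then (1 - p) / 2
           else if y = (i + 1, True) then p / 2 else 0))
     else
       (if i = 1 then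
          (if y = (1, False) then 1 - p else if y = (1, True) then p else 0)
        else if i = n then
          (if y = (n - 1, True) then 1 - p else if y = (n - 1, False) then p else 0)
        else
          (if y = (i, True) then 1/2
           else if y = (i - 1, True) then (1 - p) / 2
           else if y = (i - 1, False) then p / 2 else 0)))"

fun evolve :: "nat \<Rightarrow> nat \<Rightarrow> ((nat \<times> bool) \<Rightarrow> real) \<Rightarrow> nat \<Rightarrow> (nat \<times> bool) \<Rightarrow> real" where
  "evolve n U z 0 = z"
| "evolve n U z (Suc t) = (\<lambda>y. \<Sum>x\<in>states n. evolve n U z t x * Kmat n U x y)"

definition is_stationary :: "nat \<Rightarrow> nat \<Rightarrow> ((nat \<times> bool) \<Rightarrow> real) \<Rightarrow> bool" where
  "is_stationary n U p \<longleftrightarrow>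
     (\<forall>x\<in>states n. p x \<ge> 0) \<and> (\<forall>x. x \<notin> states n \<longrightarrow> p x = 0) \<and>
     (\<Sum>x\<in>states n. p x) = 1 \<and>
     (\<forall>y\<in>states n. (\<Sum>x\<in>states n. p x * Kmat n U x y) = p y)"

definition stat_dist :: "nat \<Rightarrow> nat \<Rightarrow> (nat \<times> bool) \<Rightarrow> real" where
  "stat_dist n U = (THE p. is_stationary n U p)"

end

theory Submission
  imports Defs
begin


abbreviation pr :: "nat \<Rightarrow> real" where "pr U \<equiv> 1 / real U"

lemma mem_states: "(i,b) \<in> states n \<longleftrightarrow> 1 \<le> i \<and> i \<le> n"
  by (auto simp: states_def)

lemma K_up_mid:
  assumes "2 \<le> i" "i \<le> n - 1" "n \<ge> 3"
  shows "Kmat n U (i,False) y = (if y = (i,False) then 1/2 else if y = (i+1,False) then (1 - pr U)/2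
     else if y = (i+1,True) then (pr U)/2 else 0)"
proof -
  have "(i,False) \<in> states n" "i \<noteq> 1" "i \<noteq> n" using assms by (auto simp: states_def)
  then show ?thesis unfolding Kmat_def Let_def fst_conv snd_conv by (simp only: if_False if_True not_False_eq_True simp_thms)
qed

lemma K_dn_mid:
  assumes "2 \<le> i" "i \<le> n - 1" "n \<ge> 3"
  shows "Kmat n U (i,True) y = (if y = (i,True) then 1/2 else if y = (i-1,True) then (1 - pr U)/2
     else if y = (i-1,False) then (pr U)/2 else 0)"
proof -
  have "(i,True) \<in> states n" "i \<noteq> 1" "i \<noteq> n" using assms by (auto simp: states_def)
  then show ?thesis unfolding Kmat_def Let_def fst_conv snd_conv by (simp only: if_False if_True not_False_eq_True simp_thms not_True_eq_False)
qed

lemma K_up1: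
  assumes "n \<ge> 3"
  shows "Kmat n U (1,False) y = (if y = (2,False) then 1 - pr U else if y = (2,True) then pr U else 0)"
proof -
  have "(1,False) \<in> states n" using assms by (auto simp: states_def)
  then show ?thesis unfolding Kmat_def Let_def fst_conv snd_conv by (simp only: if_False if_True not_False_eq_True simp_thms)
qed

lemma K_dn1:
  assumes "n \<ge> 3"
  shows "Kmat n U (1,True) y = (if y = (1,False) then 1 - pr U else if y = (1,True) then pr U else 0)"
proof -
  have "(1,True) \<in> states n" using assms by (auto simp: states_def)
  then show ?thesis unfolding Kmat_def Let_def fst_conv snd_conv by (simp only: if_False if_True not_False_eq_True simp_thms not_True_eq_False)
qed

lemma K_upn:
  assumes "n \<ge> 3"
  shows "Kmat n U (n,False) y = (if y = (n,True) then 1 - pr U else if y = (n,False) then pr U else 0)"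
proof -
  have "(n,False) \<in> states n" "n \<noteq> 1" using assms by (auto simp: states_def)
  then show ?thesis unfolding Kmat_def Let_def fst_conv snd_conv by (simp only: if_False if_True not_False_eq_True simp_thms)
qed

lemma K_dnn:
  assumes "n \<ge> 3"
  shows "Kmat n U (n,True) y = (if y = (n-1,True) then 1 - pr U else if y = (n-1,False) then pr U else 0)"
proof -
  have "(n,True) \<in> states n" "n \<noteq> 1" using assms by (auto simp: states_def)
  then show ?thesis unfolding Kmat_def Let_def fst_conv snd_conv by (simp only: if_False if_True not_False_eq_True simp_thms not_True_eq_False)
qed

lemma K_out: "x \<notin> states n \<Longrightarrow> Kmat n U x y = 0"
  unfolding Kmat_def Let_def by simp

lemma state_cases:
  assumes "x \<in> states n" "n \<ge> 3"
  obtains (um) i where "x = (i,False)" "2 \<le> i" "i \<le> n - 1"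
    | (dm) i where "x = (i,True)" "2 \<le> i" "i \<le> n - 1"
    | (u1) "x = (1,False)" | (d1) "x = (1,True)" | (un) "x = (n,False)" | (dn) "x = (n,True)"
proof -
  obtain i b where x: "x = (i,b)" by (cases x)
  have "1 \<le> i" "i \<le> n" using assms x by (auto simp: states_def)
  then consider "i = 1" | "i = n" | "2 \<le> i \<and> i \<le> n - 1" by linarith
  then show ?thesis
  proof cases
    case 1 then show ?thesis using x that by (cases b) auto
  next
    case 2 then show ?thesis using x that by (cases b) auto
  next
    case 3 then show ?thesis using x that by (cases b) auto
  qed
qed

lemma K_nonneg: assumes "U \<ge> 1" "n \<ge> 3" shows "Kmat n U x y \<ge> 0"
proof (cases "x \<in> states n")
  case False then show ?thesis by (simp add: K_out)
next
  case True
  have p: "pr U \<le> 1" "pr U \<ge> 0" using assms by auto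
  from True assms(2) show ?thesis
    by (cases rule: state_cases) (use p assms in \<open>auto simp: K_up_mid K_dn_mid K_up1[OF assms(2), simplified] K_dn1[OF assms(2), simplified] K_upn K_dnn\<close>)
qed


lemma sum_if3:
  assumes "finite S" "a \<in> S" "b \<in> S" "c \<in> S" "a \<noteq> b" "a \<noteq> c" "b \<noteq> c"
  shows "(\<Sum>y\<in>S. (if y = a then \<alpha> else if y = b then \<beta> else if y = c then \<gamma> else 0::real)) = \<alpha> + \<beta> + \<gamma>"
proof -
  have "(\<lambda>y. (if y = a then \<alpha> else if y = b then \<beta> else if y = c then \<gamma> else 0::real)) =
        (\<lambda>y. (if y = a then \<alpha> else 0) + (if y = b then \<beta> else 0) + (if y = c then \<gamma> else 0))"
    using assms by (auto simp: fun_eq_iff)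
  then show ?thesis using assms by (simp only: sum.distrib) (simp add: sum.delta)
qed

lemma sum_if2:
  assumes "finite S" "a \<in> S" "b \<in> S" "a \<noteq> b"
  shows "(\<Sum>y\<in>S. (if y = a then \<alpha> else if y = b then \<beta> else 0::real)) = \<alpha> + \<beta>"
proof -
  have "(\<lambda>y. (if y = a then \<alpha> else if y = b then \<beta> else 0::real)) =
        (\<lambda>y. (if y = a then \<alpha> else 0) + (if y = b then \<beta> else 0))"
    using assms by (auto simp: fun_eq_iff)
  then show ?thesis using assms by (simp only: sum.distrib) (simp add: sum.delta)
qed

lemma finite_states[simp]: "finite (states n)"
  unfolding states_def by simp

definition Kp :: "nat \<Rightarrow> nat \<Rightarrow> nat \<Rightarrow> (nat \<times> bool) \<Rightarrow> (nat \<times> bool) \<Rightarrow> real" where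
  "Kp n U t x y = evolve n U (\<lambda>z. if z = x then 1 else 0) t y"

locale ch =
  fixes n U :: nat
  assumes n3: "n \<ge> 3" and U3: "U \<ge> 3"
begin

abbreviation "S \<equiv> states n"
abbreviation "K \<equiv> Kmat n U"
abbreviation "p \<equiv> pr U"
abbreviation "P \<equiv> Kp n U"

lemma p_pos: "p > 0" and p_le: "p \<le> 1/3" using U3 by (auto simp: field_simps)

lemma K_nn: "K x y \<ge> 0" using K_nonneg n3 U3 by simp

lemma K_row: assumes "x \<in> S" shows "(\<Sum>y\<in>S. K x y) = 1"
  using assms n3
proof (cases rule: state_cases)
  case (um i)
  then show ?thesis using n3 by (simp add: K_up_mid sum_if3 mem_states field_simps)
next
  case (dm i)
  then have "(i,True) \<in> S" "(i-1,True) \<in> S" "(i-1,False) \<in> S" "(i,True) \<noteq> (i-1,True)"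
    using n3 by (auto simp: mem_states)
  then show ?thesis using dm by (simp add: K_dn_mid sum_if3 field_simps)
next
  case u1
  show ?thesis unfolding u1 K_up1[OF n3] using n3 by (subst sum_if2) (auto simp: mem_states)
next
  case d1
  show ?thesis unfolding d1 K_dn1[OF n3] using n3 by (subst sum_if2) (auto simp: mem_states)
next
  case un
  then show ?thesis using n3 by (simp add: K_upn sum_if2 mem_states)
next
  case dn
  then show ?thesis using n3 by (simp add: K_dnn sum_if2 mem_states)
qed

lemma P_0: "P 0 x y = (if y = x then 1 else 0)"
  by (simp add: Kp_def)

lemma P_Suc: "P (Suc t) x y = (\<Sum>w\<in>S. P t x w * K w y)"
  by (simp add: Kp_def)

lemma evolve_add: "evolve n U z (a + b) = evolve n U (evolve n U z a) b"
  by (induction b) auto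

lemma evolve_lin: "y \<in> S \<Longrightarrow> evolve n U z t y = (\<Sum>x\<in>S. z x * P t x y)"
proof (induction t arbitrary: y)
  case 0
  have "(\<Sum>x\<in>S. z x * (if y = x then 1 else 0)) = (\<Sum>x\<in>S. (if y = x then z x else 0))"
    by (intro sum.cong) auto
  then show ?case using 0 by (simp add: P_0)
next
  case (Suc t)
  have "evolve n U z (Suc t) y = (\<Sum>w\<in>S. evolve n U z t w * K w y)" by simp
  also have "\<dots> = (\<Sum>w\<in>S. (\<Sum>x\<in>S. z x * P t x w) * K w y)"
    using Suc.IH by (intro sum.cong) auto
  also have "\<dots> = (\<Sum>x\<in>S. z x * (\<Sum>w\<in>S. P t x w * K w y))"
    by (simp add: sum_distrib_left sum_distrib_right mult.assoc) (rule sum.swap)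
  also have "\<dots> = (\<Sum>x\<in>S. z x * P (Suc t) x y)" by (simp add: P_Suc)
  finally show ?case .
qed

lemma P_add: "y \<in> S \<Longrightarrow> P (a + b) x y = (\<Sum>w\<in>S. P a x w * P b w y)"
  unfolding Kp_def[of n U "a+b"] evolve_add by (simp add: evolve_lin Kp_def)

lemma P_nn: "P t x y \<ge> 0"
proof (induction t arbitrary: y)
  case 0 then show ?case by (simp add: P_0)
next
  case (Suc t) then show ?case by (simp add: P_Suc sum_nonneg K_nn)
qed

lemma P_row: "x \<in> S \<Longrightarrow> (\<Sum>y\<in>S. P t x y) = 1"
proof (induction t)
  case 0 then show ?case by (simp add: P_0)
next
  case (Suc t)
  have "(\<Sum>y\<in>S. P (Suc t) x y) = (\<Sum>w\<in>S. P t x w * (\<Sum>y\<in>S. K w y))"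
    by (simp add: P_Suc sum_distrib_left) (rule sum.swap)
  also have "\<dots> = (\<Sum>w\<in>S. P t x w)" by (simp add: K_row)
  finally show ?case using Suc by simp
qed

lemma P_ge_sum: assumes "W \<subseteq> S" "y \<in> S"
  shows "P (a + b) x y \<ge> (\<Sum>w\<in>W. P a x w * P b w y)"
  unfolding P_add[OF assms(2)]
  by (rule sum_mono2) (use assms in \<open>auto intro: mult_nonneg_nonneg P_nn\<close>)

lemma P_ge_one: assumes "w \<in> S" "y \<in> S"
  shows "P (a + b) x y \<ge> P a x w * P b w y"
  using P_ge_sum[where W="{w}" and y=y and a=a and b=b and x=x] assms by simp

lemma P_Suc_ge: assumes "W \<subseteq> S" 
  shows "P (Suc t) x y \<ge> (\<Sum>w\<in>W. P t x w * K w y)"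
  unfolding P_Suc
  by (rule sum_mono2) (use assms in \<open>auto intro: mult_nonneg_nonneg P_nn K_nn\<close>)

lemma P_1: "x \<in> S \<Longrightarrow> P 1 x y = K x y"
proof -
  assume x: "x \<in> S"
  have "(\<Sum>w\<in>S. (if w = x then 1 else 0) * K w y) = (\<Sum>w\<in>S. (if w = x then K x y else 0))"
    by (intro sum.cong) auto
  then show ?thesis using x by (simp add: P_Suc P_0)
qed

end


fun bn :: "nat \<Rightarrow> nat \<Rightarrow> real" where
  "bn 0 M = (if M = 0 then 1 else 0)"
| "bn (Suc t) M = (bn t M + (if M = 0 then 0 else bn t (M - 1))) / 2"

lemma bn_nn: "bn t M \<ge> 0"
  by (induction t arbitrary: M) auto

lemma bn_big: "M > t \<Longrightarrow> bn t M = 0"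
  by (induction t arbitrary: M) auto

lemma bn_Suc_Suc: "bn (Suc t) (Suc M) = (bn t (Suc M) + bn t M) / 2"
  by simp

lemma bn_Suc_0: "bn (Suc t) 0 = bn t 0 / 2"
  by simp

lemma E_Suc: "(\<Sum>M\<le>Suc t. bn (Suc t) M * f M) = (\<Sum>M\<le>t. bn t M * (f M + f (Suc M))) / 2"
proof -
  have "(\<Sum>M\<le>Suc t. bn (Suc t) M * f M) =
        (\<Sum>M\<le>Suc t. (bn t M * f M) / 2 + ((if M = 0 then 0 else bn t (M - 1)) * f M) / 2)"
    by (intro sum.cong) (auto simp: field_simps)
  also have "\<dots> = (\<Sum>M\<le>Suc t. bn t M * f M) / 2 + (\<Sum>M\<le>Suc t. (if M = 0 then 0 else bn t (M - 1)) * f M) / 2"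
    by (simp only: sum.distrib sum_divide_distrib)
  also have "(\<Sum>M\<le>Suc t. bn t M * f M) = (\<Sum>M\<le>t. bn t M * f M)"
    by (simp add: bn_big)
  also have "(\<Sum>M\<le>Suc t. (if M = 0 then 0 else bn t (M - 1)) * f M) = (\<Sum>M\<le>t. bn t M * f (Suc M))"
    by (subst sum.atMost_Suc_shift) simp
  finally show ?thesis by (simp add: sum.distrib[symmetric] field_simps sum_divide_distrib)
qed

lemma E_1: "(\<Sum>M\<le>t. bn t M) = 1"
proof (induction t)
  case 0 then show ?case by simp
next
  case (Suc t)
  have "(\<Sum>M\<le>Suc t. bn (Suc t) M) = (\<Sum>M\<le>Suc t. bn (Suc t) M * 1)" by simp
  also have "\<dots> = (\<Sum>M\<le>t. bn t M * (1 + 1)) / 2" by (rule E_Suc)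
  also have "\<dots> = 1" using Suc by (simp add: sum_distrib_right[symmetric])
  finally show ?case .
qed

lemma E_M: "(\<Sum>M\<le>t. bn t M * real M) = real t / 2"
proof (induction t)
  case 0 then show ?case by simp
next
  case (Suc t)
  have "(\<Sum>M\<le>Suc t. bn (Suc t) M * real M) = (\<Sum>M\<le>t. bn t M * (real M + real (Suc M))) / 2" by (rule E_Suc)
  also have "(\<Sum>M\<le>t. bn t M * (real M + real (Suc M))) = 2 * (\<Sum>M\<le>t. bn t M * real M) + (\<Sum>M\<le>t. bn t M)"
    by (simp add: algebra_simps sum.distrib sum_distrib_left)
  finally show ?case using Suc E_1[of t] by simp
qed

lemma E_M2: "(\<Sum>M\<le>t. bn t M * real M ^ 2) = real t * (real t + 1) / 4"
proof (induction t)
  case 0 then show ?case by simp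
next
  case (Suc t)
  have "(\<Sum>M\<le>Suc t. bn (Suc t) M * real M ^ 2) = (\<Sum>M\<le>t. bn t M * (real M ^ 2 + real (Suc M) ^ 2)) / 2" by (rule E_Suc)
  also have "(\<Sum>M\<le>t. bn t M * (real M ^ 2 + real (Suc M) ^ 2)) =
      2 * (\<Sum>M\<le>t. bn t M * real M ^ 2) + 2 * (\<Sum>M\<le>t. bn t M * real M) + (\<Sum>M\<le>t. bn t M)"
    by (simp add: algebra_simps power2_eq_square sum.distrib sum_distrib_left)
  finally show ?case using Suc E_1[of t] E_M[of t] by (simp add: field_simps)
qed

lemma E_var: "(\<Sum>M\<le>t. bn t M * (real M - real t / 2) ^ 2) = real t / 4"
proof -
  have "(\<Sum>M\<le>t. bn t M * (real M - real t / 2) ^ 2) =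
     (\<Sum>M\<le>t. bn t M * real M ^ 2 - real t * (bn t M * real M) + (real t)^2/4 * bn t M)"
    by (intro sum.cong) (auto simp: algebra_simps power2_eq_square)
  also have "\<dots> = (\<Sum>M\<le>t. bn t M * real M ^ 2) - real t * (\<Sum>M\<le>t. bn t M * real M) + (real t)^2/4 * (\<Sum>M\<le>t. bn t M)"
    by (simp only: sum.distrib sum_subtractf sum_distrib_left)
  finally show ?thesis unfolding E_1 E_M E_M2 by (simp add: field_simps power2_eq_square)
qed

lemma E_par: "(\<Sum>M\<le>Suc t. bn (Suc t) M * (if even M = b then 1 else 0)) = 1/2"
proof -
  have "(\<Sum>M\<le>Suc t. bn (Suc t) M * (if even M = b then 1 else 0)) =
     (\<Sum>M\<le>t. bn t M * ((if even M = b then 1 else 0) + (if even (Suc M) = b then 1 else 0))) / 2"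
    by (rule E_Suc)
  also have "(\<Sum>M\<le>t. bn t M * ((if even M = b then 1 else 0) + (if even (Suc M) = b then 1 else 0))) = (\<Sum>M\<le>t. bn t M)"
    by (intro sum.cong) auto
  finally show ?thesis using E_1[of t] by simp
qed

lemma tail_bound:
  assumes "w > 0"
  shows "(\<Sum>M\<le>t. bn t M * (if \<bar>real M - real t / 2\<bar> \<ge> w then 1 else 0)) \<le> real t / (4 * w^2)"
proof -
  have "(\<Sum>M\<le>t. bn t M * (if \<bar>real M - real t / 2\<bar> \<ge> w then 1 else 0))
      \<le> (\<Sum>M\<le>t. bn t M * ((real M - real t / 2) ^ 2 / w^2))"
  proof (intro sum_mono mult_left_mono)
    fix M
    show "(if \<bar>real M - real t / 2\<bar> \<ge> w then 1 else 0) \<le> (real M - real t / 2) ^ 2 / w^2"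
    proof (cases "\<bar>real M - real t / 2\<bar> \<ge> w")
      case True
      then have "w^2 \<le> (real M - real t / 2) ^ 2" using assms
        by (metis abs_le_square_iff abs_of_pos)
      then show ?thesis using True assms by simp
    qed simp
  qed (rule bn_nn)
  also have "\<dots> = (\<Sum>M\<le>t. bn t M * (real M - real t / 2) ^ 2) / w^2"
    by (simp add: sum_divide_distrib)
  also have "\<dots> = real t / (4 * w^2)" by (simp add: E_var)
  finally show ?thesis .
qed

lemma window:
  assumes "w > 0" "real L \<le> real t / 2 - w" "real H \<ge> real t / 2 + w"
  shows "(\<Sum>M\<in>{L..H}. bn t M) \<ge> 1 - real t / (4 * w^2)"
proof -
  have "(\<Sum>M\<le>t. bn t M) \<le> (\<Sum>M\<le>t. bn t M * (if M \<in> {L..H} then 1 else 0)) + (\<Sum>M\<le>t. bn t M * (if \<bar>real M - real t / 2\<bar> \<ge> w then 1 else 0))"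
    unfolding sum.distrib[symmetric]
  proof (intro sum_mono)
    fix M
    show "bn t M \<le> bn t M * (if M \<in> {L..H} then 1 else 0) + bn t M * (if \<bar>real M - real t / 2\<bar> \<ge> w then 1 else 0)"
      using assms bn_nn[of t M] by auto
  qed
  also have "(\<Sum>M\<le>t. bn t M * (if M \<in> {L..H} then 1 else 0)) = (\<Sum>M\<in>{M\<in>{..t}. M \<in> {L..H}}. bn t M)"
    by (rule sum.mono_neutral_cong_right) auto
  also have "\<dots> \<le> (\<Sum>M\<in>{L..H}. bn t M)"
    by (rule sum_mono2) (auto intro: bn_nn)
  finally show ?thesis using E_1[of t] tail_bound[OF assms(1), of t] by linarith
qed

lemma window_par:
  assumes "w > 0" "t \<ge> 1" "real (2*a + c) \<le> real t / 2 - w" "real (2*b + c) \<ge> real t / 2 + w"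
  shows "(\<Sum>u\<in>{a..b}. bn t (2*u + c)) \<ge> 1/2 - real t / (4 * w^2)"
proof -
  obtain t' where t': "t = Suc t'" using assms(2) by (cases t) auto
  let ?I = "\<lambda>M. if even M = even c then 1 else (0::real)"
  let ?J = "\<lambda>M. if \<bar>real M - real t / 2\<bar> \<ge> w then 1 else (0::real)"
  let ?A = "{M\<in>{..t}. even M = even c \<and> 2*a + c \<le> M \<and> M \<le> 2*b + c}"
  have "1/2 = (\<Sum>M\<le>t. bn t M * ?I M)" using E_par[of t' "even c"] t' by simp
  also have "\<dots> \<le> (\<Sum>M\<le>t. bn t M * (if M \<in> ?A then 1 else 0)) + (\<Sum>M\<le>t. bn t M * ?J M)"
    unfolding sum.distrib[symmetric]
  proof (intro sum_mono)
    fix M assume "M \<in> {..t}"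
    then show "bn t M * ?I M \<le> bn t M * (if M \<in> ?A then 1 else 0) + bn t M * ?J M"
      using assms bn_nn[of t M] by auto
  qed
  also have "(\<Sum>M\<le>t. bn t M * (if M \<in> ?A then 1 else 0)) = (\<Sum>M\<in>?A. bn t M)"
    by (rule sum.mono_neutral_cong_right) auto
  also have "\<dots> \<le> (\<Sum>M\<in>(\<lambda>u. 2*u + c) ` {a..b}. bn t M)"
  proof (rule sum_mono2)
    show "?A \<subseteq> (\<lambda>u. 2*u + c) ` {a..b}"
    proof
      fix M assume M: "M \<in> ?A"
      then have "even (M - c)" "c \<le> M" by auto
      then obtain u where u: "M - c = 2*u" unfolding dvd_def by blast
      then have "M = 2*u + c" "u \<in> {a..b}" using M by auto
      then show "M \<in> (\<lambda>u. 2*u + c) ` {a..b}" by blast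
    qed
  qed (auto intro: bn_nn)
  also have "\<dots> = (\<Sum>u\<in>{a..b}. bn t (2*u + c))"
    by (subst sum.reindex) (auto simp: inj_on_def)
  finally show ?thesis using tail_bound[OF assms(1), of t] by linarith
qed


context ch begin

lemma subsol:
  assumes x: "x \<in> S"
    and nn: "\<And>t y. LB t y \<ge> 0"
    and init: "\<And>y. y \<in> S \<Longrightarrow> LB 0 y \<le> (if y = x then 1 else 0)"
    and step: "\<And>t y. y \<in> S \<Longrightarrow> \<exists>W\<subseteq>S. LB (Suc t) y \<le> (\<Sum>w\<in>W. LB t w * K w y)"
  shows "y \<in> S \<Longrightarrow> LB t y \<le> P t x y"
proof (induction t arbitrary: y)
  case 0 then show ?case using init by (simp add: P_0)
next
  case (Suc t)
  obtain W where W: "W \<subseteq> S" "LB (Suc t) y \<le> (\<Sum>w\<in>W. LB t w * K w y)" using step Suc.prems by blast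
  have "(\<Sum>w\<in>W. LB t w * K w y) \<le> (\<Sum>w\<in>W. P t x w * K w y)"
    using W(1) Suc.IH by (intro sum_mono mult_right_mono K_nn) auto
  also have "\<dots> \<le> P (Suc t) x y" by (rule P_Suc_ge[OF W(1)])
  finally show ?case using W(2) by linarith
qed

end


context ch begin

definition Uset :: "nat \<Rightarrow> nat \<Rightarrow> nat set" where
  "Uset i j = {u. j \<le> i + u + 1 \<and> i + u + 2 \<le> n}"

lemma Uset_finite: "finite (Uset i j)"
  by (rule finite_subset[of _ "{..n}"]) (auto simp: Uset_def)

definition Dsum :: "nat \<Rightarrow> nat \<Rightarrow> nat \<Rightarrow> real" where
  "Dsum i t j = (\<Sum>u\<in>Uset i j. bn t (2*u+i+2-j) * (p * (1-p)^(2*u+i+1-j)))"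

definition LBud :: "nat \<Rightarrow> nat \<Rightarrow> nat \<times> bool \<Rightarrow> real" where
  "LBud i t y = (case y of (k, False) \<Rightarrow> if i \<le> k \<and> k \<le> n - 1 then bn t (k - i) * (1-p)^(k-i) else 0
     | (j, True) \<Rightarrow> if 2 \<le> j \<and> j \<le> n - 1 then Dsum i t j else 0)"

lemma p01: "0 \<le> p" "p \<le> 1" "0 \<le> 1 - p" using p_pos p_le by auto

lemma Dsum_nn: "Dsum i t j \<ge> 0"
  unfolding Dsum_def using p01 by (intro sum_nonneg mult_nonneg_nonneg bn_nn) auto

lemma LBud_nn: "LBud i t y \<ge> 0"
  unfolding LBud_def using p01 Dsum_nn by (auto split: prod.splits bool.splits intro!: mult_nonneg_nonneg bn_nn)

lemma Dsum_Suc: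
  assumes "2 \<le> i" "2 \<le> j" "j \<le> n - 1"
  shows "Dsum i (Suc t) j \<le> Dsum i t j / 2 + (1-p)/2 * LBud i t (j+1, True) + p/2 * LBud i t (j-1, False)"
proof -
  let ?M = "\<lambda>j u. 2*u+i+2-j" and ?g = "\<lambda>j u. p * (1-p)^(2*u+i+1-j)"
  have M1: "?M j u = Suc (?M j u - 1)" if "u \<in> Uset i j" for u using that by (auto simp: Uset_def)
  have "Dsum i (Suc t) j = (\<Sum>u\<in>Uset i j. (bn t (?M j u) + bn t (?M j u - 1)) / 2 * ?g j u)"
    unfolding Dsum_def
  proof (intro sum.cong refl)
    fix u assume u: "u \<in> Uset i j"
    show "bn (Suc t) (?M j u) * ?g j u = (bn t (?M j u) + bn t (?M j u - 1)) / 2 * ?g j u"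
    proof -
      obtain m where m: "?M j u = Suc m" using M1[OF u] by blast
      show ?thesis unfolding m by simp
    qed
  qed
  also have "\<dots> = (\<Sum>u\<in>Uset i j. (bn t (?M j u) * ?g j u) / 2 + (bn t (?M j u - 1) * ?g j u) / 2)"
    by (intro sum.cong refl) (simp only: add_divide_distrib distrib_right times_divide_eq_left)
  also have "\<dots> = Dsum i t j / 2 + (\<Sum>u\<in>Uset i j. bn t (?M j u - 1) * ?g j u) / 2"
    unfolding Dsum_def by (simp only: sum.distrib sum_divide_distrib)
  also have "(\<Sum>u\<in>Uset i j. bn t (?M j u - 1) * ?g j u) \<le> (1-p) * LBud i t (j+1, True) + p * LBud i t (j-1, False)"
  proof -
    have split: "(\<Sum>u\<in>Uset i j. bn t (?M j u - 1) * ?g j u) =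
       (\<Sum>u\<in>Uset i (j+1). bn t (?M j u - 1) * ?g j u) + (if i + 1 \<le> j then bn t (j - 1 - i) * (p * (1-p)^(j-1-i)) else 0)"
    proof (cases "i + 1 \<le> j")
      case True
      have eq: "Uset i j = insert (j - i - 1) (Uset i (j+1))" "j - i - 1 \<notin> Uset i (j+1)"
        using True assms by (auto simp: Uset_def)
      have "?M j (j - i - 1) - 1 = j - 1 - i" "2 * (j - i - 1) + i + 1 - j = j - 1 - i" using True by auto
      then show ?thesis using True unfolding eq(1) sum.insert[OF Uset_finite eq(2)] by simp
    next
      case False
      then have "Uset i j = Uset i (j+1)" by (auto simp: Uset_def)
      then show ?thesis using False by simp
    qed
    have part1: "(\<Sum>u\<in>Uset i (j+1). bn t (?M j u - 1) * ?g j u) \<le> (1-p) * LBud i t (j+1, True)"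
    proof (cases "j + 1 \<le> n - 1")
      case True
      have "(\<Sum>u\<in>Uset i (j+1). bn t (?M j u - 1) * ?g j u) = (\<Sum>u\<in>Uset i (j+1). (1-p) * (bn t (?M (j+1) u) * ?g (j+1) u))"
      proof (intro sum.cong refl)
        fix u assume u: "u \<in> Uset i (j+1)"
        then have e1: "?M j u - 1 = ?M (j+1) u" and e2: "2*u+i+1-j = Suc (2*u+i+1-(j+1))" by (auto simp: Uset_def)
        show "bn t (?M j u - 1) * ?g j u = (1-p) * (bn t (?M (j+1) u) * ?g (j+1) u)"
          unfolding e1 e2 by simp
      qed
      also have "\<dots> = (1-p) * LBud i t (j+1, True)"
        using True assms by (simp add: LBud_def Dsum_def sum_distrib_left)
      finally show ?thesis by simp
    next
      case False
      then have "Uset i (j+1) = {}" using assms by (auto simp: Uset_def)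
      then show ?thesis using LBud_nn[of i t "(j+1,True)"] p01 by simp
    qed
    have part2: "(if i + 1 \<le> j then bn t (j - 1 - i) * (p * (1-p)^(j-1-i)) else 0) \<le> p * LBud i t (j-1, False)"
      using assms LBud_nn[of i t "(j-1,False)"] p01 by (auto simp: LBud_def)
    show ?thesis using split part1 part2 by linarith
  qed
  finally show ?thesis by (simp add: field_simps)
qed

lemma Kuu: "2 \<le> k \<Longrightarrow> k \<le> n - 1 \<Longrightarrow> K (k,False) (k,False) = 1/2"
  using n3 by (simp add: K_up_mid)
lemma Kuu1: "2 \<le> k \<Longrightarrow> k \<le> n - 1 \<Longrightarrow> K (k,False) (k+1,False) = (1-p)/2"
  using n3 by (simp add: K_up_mid)
lemma Kud: "2 \<le> k \<Longrightarrow> k \<le> n - 1 \<Longrightarrow> K (k,False) (k+1,True) = p/2"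
  using n3 by (simp add: K_up_mid)
lemma Kdd: "2 \<le> k \<Longrightarrow> k \<le> n - 1 \<Longrightarrow> K (k,True) (k,True) = 1/2"
  using n3 by (simp add: K_dn_mid)
lemma Kdd1: "2 \<le> k \<Longrightarrow> k \<le> n - 1 \<Longrightarrow> K (k,True) (k-1,True) = (1-p)/2"
proof -
  assume "2 \<le> k" "k \<le> n - 1"
  moreover have "(k-1,True) \<noteq> (k,True)" using \<open>2 \<le> k\<close> by simp
  ultimately show ?thesis using n3 by (simp only: K_dn_mid if_False if_True) simp
qed
lemma Kdu: "2 \<le> k \<Longrightarrow> k \<le> n - 1 \<Longrightarrow> K (k,True) (k-1,False) = p/2"
  using n3 by (simp add: K_dn_mid)

lemma alg1: "(a + b)/2 * (q * c) = a * (q * c) * (1/2) + b * c * (q / 2)" for a b c q :: real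
  by (simp add: field_simps)

lemma sum3_ge:
  assumes "a \<noteq> b" "a \<noteq> c" "b \<noteq> c"
  shows "(\<Sum>w\<in>{a,b,c}. f w) = f a + f b + (f c::real)"
  using assms by simp

lemma LBud_step:
  assumes i: "2 \<le> i" "i \<le> n - 1" and y: "y \<in> S"
  shows "\<exists>W\<subseteq>S. LBud i (Suc t) y \<le> (\<Sum>w\<in>W. LBud i t w * K w y)"
proof -
  obtain k b where yk: "y = (k,b)" by (cases y)
  show ?thesis
  proof (cases b)
    case False
    show ?thesis
    proof (cases "i \<le> k \<and> k \<le> n - 1")
      case True
      show ?thesis
      proof (cases "k = i")
        case True
        then have "LBud i (Suc t) y = LBud i t (i,False) * K (i,False) y"
          using i yk \<open>\<not>b\<close> by (simp add: LBud_def Kuu)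
        then show ?thesis using i yk True by (intro exI[of _ "{(i,False)}"]) (auto simp: mem_states)
      next
        case False
        then obtain m where m: "k - i = Suc m" using \<open>i \<le> k \<and> k \<le> n - 1\<close> by (cases "k - i") auto
        have km: "k - 1 - i = m" "k - 1 + 1 = k" using m by auto
        have ik: "i \<le> k" "k \<le> n - 1" using \<open>i \<le> k \<and> k \<le> n - 1\<close> by auto
        have K1: "K (k,False) (k,False) = 1/2" using ik i by (intro Kuu) auto
        have K2: "K (k-1,False) (k,False) = (1-p)/2" using Kuu1[of "k-1"] km(2) ik i m by auto
        have L1: "LBud i t (k,False) = bn t (Suc m) * (1-p)^(Suc m)" using ik m by (simp add: LBud_def)
        have L2: "LBud i t (k-1,False) = bn t m * (1-p)^m"
        proof -
          have "i \<le> k - 1" "k - 1 \<le> n - 1" using ik m by auto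
          then show ?thesis using km by (simp add: LBud_def)
        qed
        have L3: "LBud i (Suc t) (k,False) = bn (Suc t) (Suc m) * (1-p)^(Suc m)" using ik m by (simp add: LBud_def)
        have "LBud i (Suc t) y = LBud i t (k,False) * K (k,False) y + LBud i t (k-1,False) * K (k-1,False) y"
        proof -
          have yb: "y = (k,False)" using yk \<open>\<not>b\<close> by simp
          show ?thesis unfolding yb K1 K2 L1 L2 L3 bn_Suc_Suc power_Suc by (rule alg1)
        qed
        moreover have "(k,False) \<noteq> (k-1,False)" using m by auto
        ultimately show ?thesis using i yk \<open>i \<le> k \<and> k \<le> n - 1\<close>
          by (intro exI[of _ "{(k,False),(k-1,False)}"]) (auto simp: mem_states)
      qed
    next
      case False
      have yb: "y = (k,False)" using yk \<open>\<not>b\<close> by simp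
      have "LBud i (Suc t) y = 0" unfolding yb LBud_def prod.case bool.case by (rule if_not_P[OF False])
      then show ?thesis by (intro exI[of _ "{}"]) auto
    qed
  next
    case True
    show ?thesis
    proof (cases "2 \<le> k \<and> k \<le> n - 1")
      case True
      let ?W = "{(k,True),(k+1,True),(k-1,False)}"
      have W: "?W \<subseteq> S" using True by (auto simp: mem_states)
      have A: "LBud i t (k,True) * K (k,True) y = Dsum i t k / 2"
        using True yk \<open>b\<close> by (simp add: LBud_def Kdd)
      have B: "LBud i t (k+1,True) * K (k+1,True) y \<ge> (1-p)/2 * LBud i t (k+1,True)"
      proof (cases "k + 1 \<le> n - 1")
        case True
        have e: "K (k+1,True) (k,True) = (1-p)/2" using Kdd1[of "k+1"] True \<open>2 \<le> k \<and> k \<le> n - 1\<close> by simp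
        have yb: "y = (k,True)" using yk \<open>b\<close> by simp
        show ?thesis unfolding yb e by simp
      next
        case False
        then have "LBud i t (k+1,True) = 0" by (simp add: LBud_def)
        then show ?thesis by simp
      qed
      have C: "LBud i t (k-1,False) * K (k-1,False) y \<ge> p/2 * LBud i t (k-1,False)"
      proof (cases "2 \<le> k - 1")
        case True
        have "k - 1 + 1 = k" using True by simp
        have "k - 1 \<le> n - 1" using \<open>2 \<le> k \<and> k \<le> n - 1\<close> by arith
        have e0: "K (k-1,False) (k-1+1,True) = p/2" by (rule Kud) (use True \<open>k - 1 \<le> n - 1\<close> in auto)
        have e: "K (k-1,False) (k,True) = p/2" using e0 unfolding \<open>k - 1 + 1 = k\<close> .
        have yb: "y = (k,True)" using yk \<open>b\<close> by simp
        show ?thesis unfolding yb e by simp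
      next
        case False
        then have "LBud i t (k-1,False) = 0" using i by (simp add: LBud_def)
        then show ?thesis by simp
      qed
      have yb: "y = (k,True)" using yk \<open>b\<close> by simp
      have "LBud i (Suc t) y = Dsum i (Suc t) k"
        unfolding yb LBud_def prod.case bool.case by (rule if_P[OF True])
      also have "\<dots> \<le> Dsum i t k / 2 + (1-p)/2 * LBud i t (k+1, True) + p/2 * LBud i t (k-1, False)"
        using True by (intro Dsum_Suc[OF i(1)]) auto
      also have "\<dots> \<le> (\<Sum>w\<in>?W. LBud i t w * K w y)"
      proof -
        have d: "(k,True) \<noteq> (k+1,True)" "(k,True) \<noteq> (k-1,False)" "(k+1,True) \<noteq> (k-1,False)" by auto
        show ?thesis unfolding sum3_ge[OF d] using A B C by linarith
      qed
      finally show ?thesis using W by blast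
    next
      case False
      have yb: "y = (k,True)" using yk \<open>b\<close> by simp
      have "LBud i (Suc t) y = 0" unfolding yb LBud_def prod.case bool.case by (rule if_not_P[OF False])
      then show ?thesis by (intro exI[of _ "{}"]) auto
    qed
  qed
qed

lemma Lud_LB:
  assumes i: "2 \<le> i" "i \<le> n - 1" and y: "y \<in> S"
  shows "LBud i t y \<le> P t (i,False) y"
proof (rule subsol[where LB = "LBud i"])
  show "(i,False) \<in> S" using i by (auto simp: mem_states)
  show "\<And>t y. 0 \<le> LBud i t y" by (rule LBud_nn)
  show "\<And>t y. y \<in> S \<Longrightarrow> \<exists>W\<subseteq>S. LBud i (Suc t) y \<le> (\<Sum>w\<in>W. LBud i t w * K w y)"
    by (rule LBud_step[OF i])
  show "y \<in> S" by fact
  fix y assume "y \<in> S"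
  show "LBud i 0 y \<le> (if y = (i, False) then 1 else 0)"
  proof -
    obtain k b where yk: "y = (k,b)" by (cases y)
    have "Dsum i 0 k = 0" unfolding Dsum_def by (intro sum.neutral) (auto simp: Uset_def)
    then show ?thesis using yk
    proof (cases b)
      case False
      show ?thesis
      proof (cases "k = i")
        case True then show ?thesis using yk False by (simp add: LBud_def)
      next
        case ne: False
        show ?thesis
        proof (cases "i \<le> k \<and> k \<le> n - 1")
          case True
          then have "k - i \<noteq> 0" using ne by auto
          then show ?thesis using yk False ne True by (simp add: LBud_def)
        next
          case nt: False
          have "LBud i 0 (k,False) = 0" unfolding LBud_def prod.case bool.case by (rule if_not_P[OF nt])
          then show ?thesis using yk False by simp
        qed
      qed
    next
      case True
      show ?thesis using yk True \<open>Dsum i 0 k = 0\<close> by (simp add: LBud_def)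
    qed
  qed
qed


end


context ch begin

lemma Dsum_ge:
  "Dsum i t j \<ge> p * (1-p)^t * (\<Sum>u\<in>Uset i j. bn t (2*u+i+2-j))"
proof -
  have "p * (1-p)^t * (\<Sum>u\<in>Uset i j. bn t (2*u+i+2-j)) = (\<Sum>u\<in>Uset i j. bn t (2*u+i+2-j) * (p * (1-p)^t))"
    by (simp add: sum_distrib_left mult_ac)
  also have "\<dots> \<le> Dsum i t j"
    unfolding Dsum_def
  proof (intro sum_mono)
    fix u assume u: "u \<in> Uset i j"
    show "bn t (2*u+i+2-j) * (p * (1-p)^t) \<le> bn t (2*u+i+2-j) * (p * (1-p)^(2*u+i+1-j))"
    proof (cases "2*u+i+2-j > t")
      case True then show ?thesis by (simp add: bn_big)
    next
      case False
      then have "2*u+i+1-j \<le> t" by simp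
      then have "(1-p)^t \<le> (1-p)^(2*u+i+1-j)" using p01 by (intro power_decreasing) auto
      then show ?thesis using p01 bn_nn by (intro mult_left_mono) auto
    qed
  qed
  finally show ?thesis .
qed

lemma Lud_win:
  assumes i: "2 \<le> i" "i + 2 \<le> n" and j: "2 \<le> j" "j \<le> n - 1" and w: "w > 0" and t: "t \<ge> 1"
    and c1: "real j + 2 \<le> real i + real t / 2 - w" and c2: "real i + 2 \<le> real j + real t / 2 - w"
    and c3: "real t / 2 + w \<le> 2 * real n - 2 - real i - real j"
  shows "P t (i,False) (j,True) \<ge> p * (1-p)^t * (1/2 - real t / (4 * w^2))"
proof -
  define a where "a = j - (i+1)"
  define b where "b = n - 2 - i"
  define c where "c = 2*a + i + 2 - j"
  have ab: "a \<le> b" using i j by (simp add: a_def b_def)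
  have Ueq: "Uset i j = {a..b}" using i j by (auto simp: Uset_def a_def b_def)
  have creal: "real c \<le> real t / 2 - w"
  proof (cases "i + 1 \<le> j")
    case True then have "c = j - i" by (simp add: c_def a_def)
    then show ?thesis using True c1 by (simp add: of_nat_diff)
  next
    case False then have "c = i + 2 - j" by (simp add: c_def a_def)
    then show ?thesis using False c2 by (simp add: of_nat_diff)
  qed
  have ceq: "2*(b-a) + c = 2*n - 2 - i - j" using i j ab by (simp add: c_def a_def b_def)
  have c2real: "real (2*(b-a) + c) \<ge> real t / 2 + w"
    unfolding ceq using c3 i j by (simp add: of_nat_diff)
  have "(\<Sum>u\<in>Uset i j. bn t (2*u+i+2-j)) = (\<Sum>v\<in>{0..b-a}. bn t (2*(v+a)+i+2-j))"
    unfolding Ueq using sum.shift_bounds_cl_nat_ivl[of "\<lambda>u. bn t (2*u+i+2-j)" 0 a "b-a"] ab by simp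
  also have "\<dots> = (\<Sum>v\<in>{0..b-a}. bn t (2*v + c))"
  proof (intro sum.cong refl)
    fix v
    have jle: "j \<le> 2*a + i + 2" by (simp add: a_def)
    then have "2*(v+a)+i+2-j = 2*v + c" unfolding c_def by arith
    then show "bn t (2*(v+a)+i+2-j) = bn t (2*v + c)" by simp
  qed
  finally have eq: "(\<Sum>u\<in>Uset i j. bn t (2*u+i+2-j)) = (\<Sum>v\<in>{0..b-a}. bn t (2*v + c))" .
  have win: "(\<Sum>v\<in>{0..b-a}. bn t (2*v + c)) \<ge> 1/2 - real t / (4 * w^2)"
    using window_par[OF w t, of 0 c "b-a"] creal c2real by simp
  have pp: "p * (1-p)^t \<ge> 0" using p01 by simp
  have "p * (1-p)^t * (1/2 - real t / (4 * w^2)) \<le> p * (1-p)^t * (\<Sum>v\<in>{0..b-a}. bn t (2*v + c))"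
    by (rule mult_left_mono[OF win pp])
  also have "\<dots> = p * (1-p)^t * (\<Sum>u\<in>Uset i j. bn t (2*u+i+2-j))" using eq by simp
  also have "\<dots> \<le> Dsum i t j" by (rule Dsum_ge)
  also have "\<dots> = LBud i t (j,True)" using j by (simp add: LBud_def)
  also have "\<dots> \<le> P t (i,False) (j,True)"
    using Lud_LB[of i "(j,True)" t] i j by (simp add: mem_states)
  finally show ?thesis .
qed

end


context ch begin

definition LBc :: "nat \<Rightarrow> nat \<Rightarrow> nat \<times> bool \<Rightarrow> real" where
  "LBc i t y = (case y of (k, False) \<Rightarrow>
        if i \<le> k \<and> k \<le> n - 1 then bn t (k - i) * (1-p)^(k-i)
        else if k = n \<and> 1 \<le> t then bn (t-1) (n-1-i) * (1-p)^(n-i) / 2 else 0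
     | (k, True) \<Rightarrow>
        if k = n \<and> 2 \<le> t then bn (t-2) (n-1-i) * (1-p)^(n-i+1) / 2
        else if 2 \<le> k \<and> k \<le> n - 1 \<and> 2 \<le> t then bn (t-2) (2*n-i-k-1) * (1-p)^(2*n-i-k+1) else 0)"

lemma nn1[simp]: "\<not> (n \<le> n - Suc 0)" using n3 by simp
lemma nn2[simp]: "n - Suc 0 \<noteq> n" using n3 by simp

lemma LBc_nn: "LBc i t y \<ge> 0"
  unfolding LBc_def using p01 by (auto split: prod.splits bool.splits intro!: mult_nonneg_nonneg bn_nn divide_nonneg_nonneg)

lemma alg2: "(a + b)/2 * (q * c) = a * (q * c) * (1/2) + b * c * (q / 2)" for a b c q :: real
  by (simp add: field_simps)

lemma alg3: "(a + b)/2 * q^(m+3) = a * q^(m+3) * (1/2) + b * q^(m+2) / 2 * q" for a b q :: real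
proof -
  have "q^(m+3) = q^(m+2) * q" by (simp add: power_add power2_eq_square power3_eq_cube)
  then show ?thesis by (simp add: field_simps)
qed

lemma alg4: "(a + b)/2 * q^(m+3) = a * q^(m+3) * (1/2) + b * q^(m+2) * (q / 2)" for a b q :: real
proof -
  have "q^(m+3) = q^(m+2) * q" by (simp add: power_add power2_eq_square power3_eq_cube)
  then show ?thesis by (simp add: field_simps)
qed

lemma LBc_step:
  assumes i: "2 \<le> i" "i \<le> n - 1" and y: "y \<in> S"
  shows "\<exists>W\<subseteq>S. LBc i (Suc t) y \<le> (\<Sum>w\<in>W. LBc i t w * K w y)"
proof -
  obtain k b where yk: "y = (k,b)" by (cases y)
  have kS: "1 \<le> k" "k \<le> n" using y yk by (auto simp: mem_states)
  show ?thesis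
  proof (cases b)
    case False
    have yb: "y = (k,False)" using yk False by simp
    consider "k = i" | "i < k \<and> k \<le> n - 1" | "k = n" | "k < i" using kS i by linarith
    then show ?thesis
    proof cases
      case 1
      have K1: "K (i,False) (i,False) = 1/2" by (rule Kuu) (use i in auto)
      have "LBc i (Suc t) y = LBc i t (i,False) * K (i,False) y"
        using i unfolding yb 1 K1 by (simp add: LBc_def)
      then show ?thesis using i by (intro exI[of _ "{(i,False)}"]) (auto simp: mem_states)
    next
      case 2
      then obtain m where m: "k - i = Suc m" by (cases "k - i") auto
      have km: "k - 1 - i = m" "k - 1 + 1 = k" using m by auto
      have K1: "K (k,False) (k,False) = 1/2" by (rule Kuu) (use 2 i in auto)
      have K2': "K (k-1,False) (k-1+1,False) = (1-p)/2" by (rule Kuu1) (use 2 i m in auto)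
      have K2: "K (k-1,False) (k,False) = (1-p)/2" using K2' unfolding km(2) .
      have L1: "LBc i t (k,False) = bn t (Suc m) * (1-p)^(Suc m)" using 2 m by (simp add: LBc_def)
      have L2: "LBc i t (k-1,False) = bn t m * (1-p)^m"
      proof -
        have "i \<le> k - 1" "k - 1 \<le> n - 1" using 2 m by auto
        then show ?thesis using km by (simp add: LBc_def)
      qed
      have L3: "LBc i (Suc t) (k,False) = bn (Suc t) (Suc m) * (1-p)^(Suc m)" using 2 m by (simp add: LBc_def)
      have "LBc i (Suc t) y = LBc i t (k,False) * K (k,False) y + LBc i t (k-1,False) * K (k-1,False) y"
        unfolding yb K1 K2 L1 L2 L3 bn_Suc_Suc power_Suc by (rule alg2)
      moreover have "(k,False) \<noteq> (k-1,False)" using m by auto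
      ultimately show ?thesis using 2 i
        by (intro exI[of _ "{(k,False),(k-1,False)}"]) (auto simp: mem_states)
    next
      case 3
      have nn: "n - 1 + 1 = n" using n3 by simp
      have K2': "K (n-1,False) (n-1+1,False) = (1-p)/2" by (rule Kuu1) (use i n3 in auto)
      have K2: "K (n-1,False) (n,False) = (1-p)/2" using K2' unfolding nn .
      have L1: "LBc i t (n-1,False) = bn t (n-1-i) * (1-p)^(n-1-i)" using i by (simp add: LBc_def)
      have L2: "LBc i (Suc t) (n,False) = bn t (n-1-i) * (1-p)^(n-i) / 2"
      proof -
        have "\<not> n \<le> n - 1" using n3 by simp
        then show ?thesis using i n3 by (simp add: LBc_def)
      qed
      have pw: "(1-p)^(n-i) = (1-p)^(n-1-i) * (1-p)"
      proof -
        have "n - i = Suc (n-1-i)" using i n3 by arith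
        then show ?thesis by (simp add: mult.commute)
      qed
      have "LBc i (Suc t) y = LBc i t (n-1,False) * K (n-1,False) y"
        unfolding yb 3 L1 L2 K2 pw by simp
      then show ?thesis using i n3 by (intro exI[of _ "{(n-1,False)}"]) (auto simp: mem_states)
    next
      case 4
      then have "LBc i (Suc t) y = 0" unfolding yb using n3 i by (auto simp: LBc_def)
      then show ?thesis by (intro exI[of _ "{}"]) auto
    qed
  next
    case True
    have yb: "y = (k,True)" using yk True by simp
    consider "k = n" | "2 \<le> k \<and> k + 1 = n" | "2 \<le> k \<and> k + 2 \<le> n" | "k = 1" using kS by linarith
    then show ?thesis
    proof cases
      case 1
      have K1: "K (n,False) (n,True) = 1 - p" using n3 by (simp add: K_upn)
      have "LBc i (Suc t) y \<le> LBc i t (n,False) * K (n,False) y"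
      proof (cases "t \<ge> 1")
        case True
        then obtain t' where t': "t = Suc t'" by (cases t) auto
        have "LBc i (Suc t) y = bn t' (n-1-i) * (1-p)^(n-i+1) / 2" unfolding yb 1 t' by (simp add: LBc_def)
        also have "\<dots> = LBc i t (n,False) * K (n,False) y"
          unfolding yb 1 K1 t' using i by (simp add: LBc_def)
        finally show ?thesis by simp
      next
        case False
        then show ?thesis unfolding yb 1 using LBc_nn[of i t "(n,False)"] K1 p01 by (simp add: LBc_def)
      qed
      then show ?thesis using n3 by (intro exI[of _ "{(n,False)}"]) (auto simp: mem_states)
    next
      case 2
      have kk: "k = n - 1" using 2 by arith
      define m where "m = n - 1 - i"
      have e: "2*n-i-k-1 = Suc m" "2*n-i-k+1 = m + 3" "n - i + 1 = m + 2" "n - i = Suc m"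
        using 2 i by (auto simp: m_def)
      have W: "{(k,True),(n,True)} \<subseteq> S" "(k,True) \<noteq> (n,True)" using 2 by (auto simp: mem_states)
      have K1: "K (k,True) (k,True) = 1/2" by (rule Kdd) (use 2 in auto)
      have K2: "K (n,True) (k,True) = 1 - p" unfolding kk using n3 by (simp add: K_dnn)
      have "LBc i (Suc t) y \<le> LBc i t (k,True) * K (k,True) y + LBc i t (n,True) * K (n,True) y"
      proof -
        consider "t = 0" | "t = 1" | t'' where "t = Suc (Suc t'')" by (metis One_nat_def not0_implies_Suc)
        then show ?thesis
        proof cases
          case 1
          then show ?thesis unfolding yb using 2 LBc_nn[of i t] K_nn by (simp add: LBc_def)
        next
          case 2
          have "LBc i (Suc t) y = 0" unfolding yb 2 using \<open>2 \<le> k \<and> k + 1 = n\<close> e by (simp add: LBc_def)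
          then show ?thesis using LBc_nn[of i t] K_nn by (simp add: add_nonneg_nonneg)
        next
          case 3
          have L0: "LBc i (Suc t) (k,True) = bn (Suc t'') (Suc m) * (1-p)^(m+3)"
            unfolding 3 using \<open>2 \<le> k \<and> k + 1 = n\<close> e kk by (simp add: LBc_def power_add power3_eq_cube)
          have L1: "LBc i t (k,True) = bn t'' (Suc m) * (1-p)^(m+3)"
            unfolding 3 using \<open>2 \<le> k \<and> k + 1 = n\<close> e kk by (simp add: LBc_def power_add power3_eq_cube)
          have L2: "LBc i t (n,True) = bn t'' m * (1-p)^(m+2) / 2"
            unfolding 3 using e by (simp add: LBc_def m_def)
          show ?thesis unfolding yb L0 L1 L2 K1 K2 bn_Suc_Suc alg3 by simp
        qed
      qed
      then show ?thesis using W by (intro exI[of _ "{(k,True),(n,True)}"]) auto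
    next
      case 3
      define m where "m = 2*n-i-k-2"
      have "k \<le> n - 1" "k + 1 \<le> n - 1" using 3 by arith+
      have e: "2*n-i-k-1 = Suc m" "2*n-i-k+1 = m + 3" "2*n-i-(k+1)-1 = m" "2*n-i-(k+1)+1 = m + 2"
        using 3 i by (auto simp: m_def)
      have W: "{(k,True),(k+1,True)} \<subseteq> S" "(k,True) \<noteq> (k+1,True)" using 3 by (auto simp: mem_states)
      have K1: "K (k,True) (k,True) = 1/2" by (rule Kdd) (use 3 in auto)
      have K2': "K (k+1,True) (k+1-1,True) = (1-p)/2" by (rule Kdd1) (use 3 in auto)
      have K2: "K (k+1,True) (k,True) = (1-p)/2" using K2' by simp
      have "LBc i (Suc t) y \<le> LBc i t (k,True) * K (k,True) y + LBc i t (k+1,True) * K (k+1,True) y"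
      proof -
        consider "t = 0" | "t = 1" | t'' where "t = Suc (Suc t'')" by (metis One_nat_def not0_implies_Suc)
        then show ?thesis
        proof cases
          case 1
          then show ?thesis unfolding yb using 3 LBc_nn[of i t] K_nn by (simp add: LBc_def)
        next
          case 2
          have "LBc i (Suc t) y = 0" unfolding yb 2 using \<open>2 \<le> k \<and> k + 2 \<le> n\<close> e by (simp add: LBc_def)
          then show ?thesis using LBc_nn[of i t] K_nn by (simp add: add_nonneg_nonneg)
        next
          case 3
          have L0: "LBc i (Suc t) (k,True) = bn (Suc t'') (Suc m) * (1-p)^(m+3)"
            unfolding 3 using \<open>2 \<le> k \<and> k + 2 \<le> n\<close> e \<open>k \<le> n - 1\<close> by (simp add: LBc_def power_add power3_eq_cube)
          have L1: "LBc i t (k,True) = bn t'' (Suc m) * (1-p)^(m+3)"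
            unfolding 3 using \<open>2 \<le> k \<and> k + 2 \<le> n\<close> e \<open>k \<le> n - 1\<close> \<open>k + 1 \<le> n - 1\<close> by (simp add: LBc_def power_add power3_eq_cube power2_eq_square)
          have L2: "LBc i t (k+1,True) = bn t'' m * (1-p)^(m+2)"
            unfolding 3 using \<open>2 \<le> k \<and> k + 2 \<le> n\<close> e \<open>k \<le> n - 1\<close> \<open>k + 1 \<le> n - 1\<close> by (simp add: LBc_def power_add power3_eq_cube power2_eq_square)
          show ?thesis unfolding yb L0 L1 L2 K1 K2 bn_Suc_Suc alg4 by simp
        qed
      qed
      then show ?thesis using W by (intro exI[of _ "{(k,True),(k+1,True)}"]) auto
    next
      case 4
      have "LBc i (Suc t) y = 0" unfolding yb 4 using n3 by (simp add: LBc_def)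
      then show ?thesis by (intro exI[of _ "{}"]) auto
    qed
  qed
qed

lemma Lc_LB:
  assumes i: "2 \<le> i" "i \<le> n - 1" and y: "y \<in> S"
  shows "LBc i t y \<le> P t (i,False) y"
proof (rule subsol[where LB = "LBc i"])
  show "(i,False) \<in> S" using i by (auto simp: mem_states)
  show "\<And>t y. 0 \<le> LBc i t y" by (rule LBc_nn)
  show "\<And>t y. y \<in> S \<Longrightarrow> \<exists>W\<subseteq>S. LBc i (Suc t) y \<le> (\<Sum>w\<in>W. LBc i t w * K w y)"
    by (rule LBc_step[OF i])
  show "y \<in> S" by fact
  fix y assume "y \<in> S"
  obtain k b where yk: "y = (k,b)" by (cases y)
  show "LBc i 0 y \<le> (if y = (i, False) then 1 else 0)"
  proof (cases b)
    case False
    show ?thesis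
    proof (cases "k = i")
      case True then show ?thesis using yk False i by (simp add: LBc_def)
    next
      case ne: False
      then show ?thesis using yk False i by (auto simp: LBc_def)
    qed
  next
    case True
    then show ?thesis using yk by (simp add: LBc_def)
  qed
qed

end


context ch begin

lemma cross_mass:
  assumes i: "2 \<le> i" "i \<le> n - 1" and k: "2 \<le> k1" "k1 \<le> k2" "k2 \<le> n - 1"
    and w: "w > 0" and t: "t \<ge> 2"
    and c1: "real (2*n - i - k2 - 1) \<le> (real t - 2) / 2 - w"
    and c2: "real (2*n - i - k1 - 1) \<ge> (real t - 2) / 2 + w"
  shows "(\<Sum>k\<in>{k1..k2}. P t (i,False) (k,True)) \<ge> (1-p)^(2*n) * (1 - (real t - 2) / (4 * w^2))"
proof -
  define C where "C = 2*n - i - 1"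
  have Ck: "k2 < C" using i k by (simp add: C_def)
  have "(1-p)^(2*n) * (1 - (real t - 2) / (4 * w^2)) \<le> (1-p)^(2*n) * (\<Sum>M\<in>{C-k2..C-k1}. bn (t-2) M)"
  proof (rule mult_left_mono)
    have rt: "real (t - 2) = real t - 2" using t by (simp add: of_nat_diff)
    have "C - k2 = 2*n - i - k2 - 1" "C - k1 = 2*n - i - k1 - 1" by (simp_all add: C_def)
    then show "1 - (real t - 2) / (4 * w^2) \<le> (\<Sum>M\<in>{C-k2..C-k1}. bn (t-2) M)"
      using window[OF w, of "C-k2" "t-2" "C-k1"] c1 c2 rt by simp
  qed (use p01 in simp)
  also have "\<dots> = (\<Sum>k\<in>{k1..k2}. bn (t-2) (C - k) * (1-p)^(2*n))"
  proof -
    have "(\<Sum>k\<in>{k1..k2}. bn (t-2) (C - k)) = (\<Sum>M\<in>{C-k2..C-k1}. bn (t-2) M)"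
      by (rule sum.reindex_bij_witness[where i = "\<lambda>M. C - M" and j = "\<lambda>k. C - k"]) (use Ck in auto)
    then show ?thesis by (simp only: sum_distrib_right[symmetric] mult.commute)
  qed
  also have "\<dots> \<le> (\<Sum>k\<in>{k1..k2}. LBc i t (k,True))"
  proof (intro sum_mono)
    fix k assume kk: "k \<in> {k1..k2}"
    then have kr: "2 \<le> k" "k \<le> n - 1" "k \<noteq> n" using k n3 by auto
    have e: "C - k = 2*n-i-k-1" by (simp add: C_def)
    have "(1-p)^(2*n) \<le> (1-p)^(2*n-i-k+1)" using p01 kr i by (intro power_decreasing) auto
    then have "bn (t-2) (C - k) * (1-p)^(2*n) \<le> bn (t-2) (2*n-i-k-1) * (1-p)^(2*n-i-k+1)"
      unfolding e by (intro mult_left_mono bn_nn)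
    then show "bn (t-2) (C - k) * (1-p)^(2*n) \<le> LBc i t (k,True)"
      using kr t by (simp add: LBc_def)
  qed
  also have "\<dots> \<le> (\<Sum>k\<in>{k1..k2}. P t (i,False) (k,True))"
    using k by (intro sum_mono Lc_LB[OF i]) (auto simp: mem_states)
  finally show ?thesis .
qed

end


context ch begin

definition phi :: "nat \<times> bool \<Rightarrow> nat \<times> bool" where
  "phi x = (n + 1 - fst x, \<not> snd x)"

lemma phi_S: "x \<in> S \<Longrightarrow> phi x \<in> S"
  by (cases x) (auto simp: phi_def mem_states)

lemma phi_phi: "x \<in> S \<Longrightarrow> phi (phi x) = x"
  by (cases x) (auto simp: phi_def mem_states)

lemma K_phi:
  assumes x: "x \<in> S" and y: "y \<in> S"
  shows "K (phi x) (phi y) = K x y"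
proof -
  obtain j c where yc: "y = (j,c)" by (cases y)
  have j: "1 \<le> j" "j \<le> n" using y yc by (auto simp: mem_states)
  from x n3 show ?thesis
  proof (cases rule: state_cases)
    case (um i)
    have px: "phi x = (n+1-i, True)" using um by (simp add: phi_def)
    have a: "2 \<le> n+1-i" "n+1-i \<le> n-1" using um by auto
    show ?thesis unfolding px K_dn_mid[OF a n3] unfolding um(1) K_up_mid[OF um(2,3) n3] yc
      using j um by (auto simp: phi_def)
  next
    case (dm i)
    have px: "phi x = (n+1-i, False)" using dm by (simp add: phi_def)
    have a: "2 \<le> n+1-i" "n+1-i \<le> n-1" using dm by auto
    show ?thesis unfolding px K_up_mid[OF a n3] unfolding dm(1) K_dn_mid[OF dm(2,3) n3] yc
      using j dm by (auto simp: phi_def)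
  next
    case u1
    have px: "phi x = (n, True)" using u1 by (simp add: phi_def)
    show ?thesis unfolding px K_dnn[OF n3] unfolding u1 K_up1[OF n3] yc
      using j n3 by (auto simp: phi_def)
  next
    case d1
    have px: "phi x = (n, False)" using d1 by (simp add: phi_def)
    show ?thesis unfolding px K_upn[OF n3] unfolding d1 K_dn1[OF n3] yc
      using j n3 by (auto simp: phi_def)
  next
    case un
    have px: "phi x = (1, True)" using un by (simp add: phi_def)
    show ?thesis unfolding px K_dn1[OF n3] unfolding un K_upn[OF n3] yc
      using j n3 by (auto simp: phi_def)
  next
    case dn
    have px: "phi x = (1, False)" using dn by (simp add: phi_def)
    show ?thesis unfolding px K_up1[OF n3] unfolding dn K_dnn[OF n3] yc
      using j n3 by (auto simp: phi_def)
  qed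
qed

lemma P_phi:
  assumes x: "x \<in> S" and y: "y \<in> S"
  shows "P t (phi x) (phi y) = P t x y"
  using y
proof (induction t arbitrary: y)
  case 0
  have "phi y = phi x \<longleftrightarrow> y = x" using x 0 phi_phi by metis
  then show ?case by (simp add: P_0)
next
  case (Suc t)
  have "P (Suc t) (phi x) (phi y) = (\<Sum>w\<in>S. P t (phi x) w * K w (phi y))" by (rule P_Suc)
  also have "\<dots> = (\<Sum>v\<in>S. P t (phi x) (phi v) * K (phi v) (phi y))"
    by (rule sum.reindex_bij_witness[where i = phi and j = phi]) (auto simp: phi_S phi_phi)
  also have "\<dots> = (\<Sum>v\<in>S. P t x v * K v y)"
    using Suc by (intro sum.cong refl) (simp add: K_phi x)
  also have "\<dots> = P (Suc t) x y" by (rule P_Suc[symmetric])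
  finally show ?case .
qed

lemma phi_up: "i \<le> n \<Longrightarrow> phi (n+1-i, False) = (i, True)" by (simp add: phi_def)
lemma phi_dn: "i \<le> n \<Longrightarrow> phi (n+1-i, True) = (i, False)" by (simp add: phi_def)

lemma Ldu_win:
  assumes i: "3 \<le> i" "i \<le> n - 1" and j: "2 \<le> j" "j \<le> n - 1" and w: "w > 0" and t: "t \<ge> 1"
    and c1: "real i + 2 \<le> real j + real t / 2 - w" and c2: "real j + 2 \<le> real i + real t / 2 - w"
    and c3: "real t / 2 + w \<le> real i + real j - 4"
  shows "P t (i,True) (j,False) \<ge> p * (1-p)^t * (1/2 - real t / (4 * w^2))"
proof -
  have "P t (i,True) (j,False) = P t (phi (n+1-i, False)) (phi (n+1-j, True))"
    using i j by (simp add: phi_def)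
  also have "\<dots> = P t (n+1-i, False) (n+1-j, True)"
    using i j by (intro P_phi) (auto simp: mem_states)
  finally have e: "P t (i,True) (j,False) = P t (n+1-i, False) (n+1-j, True)" .
  have "P t (n+1-i, False) (n+1-j, True) \<ge> p * (1-p)^t * (1/2 - real t / (4 * w^2))"
    by (rule Lud_win) (use i j w t c1 c2 c3 in \<open>auto simp: of_nat_diff\<close>)
  then show ?thesis using e by simp
qed

lemma cross_mass_bot:
  assumes i: "2 \<le> i" "i \<le> n - 1" and k: "2 \<le> k1" "k1 \<le> k2" "k2 \<le> n - 1"
    and w: "w > 0" and t: "t \<ge> 2"
    and c1: "real (i + k1 - 3) \<le> (real t - 2) / 2 - w"
    and c2: "real (i + k2 - 3) \<ge> (real t - 2) / 2 + w"
  shows "(\<Sum>k\<in>{k1..k2}. P t (i,True) (k,False)) \<ge> (1-p)^(2*n) * (1 - (real t - 2) / (4 * w^2))"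
proof -
  have "(\<Sum>k\<in>{k1..k2}. P t (i,True) (k,False)) = (\<Sum>k\<in>{k1..k2}. P t (n+1-i, False) (n+1-k, True))"
  proof (intro sum.cong refl)
    fix k assume kk: "k \<in> {k1..k2}"
    have "P t (i,True) (k,False) = P t (phi (n+1-i, False)) (phi (n+1-k, True))"
    proof -
      have "Suc n - (Suc n - k) = k" using kk k by auto
      then show ?thesis using i by (simp add: phi_def)
    qed
    also have "\<dots> = P t (n+1-i, False) (n+1-k, True)"
      using i k kk by (intro P_phi) (auto simp: mem_states)
    finally show "P t (i,True) (k,False) = P t (n+1-i, False) (n+1-k, True)" .
  qed
  also have "\<dots> = (\<Sum>k\<in>{n+1-k2..n+1-k1}. P t (n+1-i, False) (k, True))"
    by (rule sum.reindex_bij_witness[where i = "\<lambda>k. n+1-k" and j = "\<lambda>k. n+1-k"]) (use k in auto)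
  finally have e: "(\<Sum>k\<in>{k1..k2}. P t (i,True) (k,False)) = (\<Sum>k\<in>{n+1-k2..n+1-k1}. P t (n+1-i, False) (k, True))" .
  have a1: "2*n - (n+1-i) - (n+1-k1) - 1 = i + k1 - 3" "2*n - (n+1-i) - (n+1-k2) - 1 = i + k2 - 3"
    using i k by auto
  have "(\<Sum>k\<in>{n+1-k2..n+1-k1}. P t (n+1-i, False) (k, True)) \<ge> (1-p)^(2*n) * (1 - (real t - 2) / (4 * w^2))"
    by (rule cross_mass) (use i k w t c1 c2 a1 in auto)
  then show ?thesis using e by simp
qed

end


context ch begin

definition pist :: "nat \<times> bool \<Rightarrow> real" where
  "pist x = (if 1 \<le> fst x \<and> fst x \<le> n then (if fst x = 1 \<or> fst x = n then 1 / (4 * (real n - 1)) else 1 / (2 * (real n - 1))) else 0)"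

lemma K_supp:
  assumes x: "x \<in> S" and nz: "K x y \<noteq> 0"
  shows "(\<exists>i. x = (i,False) \<and> 2 \<le> i \<and> i \<le> n - 1 \<and> (y = (i,False) \<or> y = (i+1,False) \<or> y = (i+1,True)))
       \<or> (\<exists>i. x = (i,True) \<and> 2 \<le> i \<and> i \<le> n - 1 \<and> (y = (i,True) \<or> y = (i-1,True) \<or> y = (i-1,False)))
       \<or> (x = (1,False) \<and> (y = (2,False) \<or> y = (2,True)))
       \<or> (x = (1,True) \<and> (y = (1,False) \<or> y = (1,True)))
       \<or> (x = (n,False) \<and> (y = (n,True) \<or> y = (n,False)))
       \<or> (x = (n,True) \<and> (y = (n-1,True) \<or> y = (n-1,False)))"
  using x n3
proof (cases rule: state_cases)
  case (um i) then show ?thesis using nz K_up_mid[OF um(2,3) n3, of U y] by (auto split: if_splits)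
next
  case (dm i) then show ?thesis using nz K_dn_mid[OF dm(2,3) n3, of U y] by (auto split: if_splits)
next
  case u1 then show ?thesis using nz K_up1[OF n3, of U y] by (auto split: if_splits)
next
  case d1 then show ?thesis using nz K_dn1[OF n3, of U y] by (auto split: if_splits)
next
  case un then show ?thesis using nz K_upn[OF n3, of U y] by (auto split: if_splits)
next
  case dn then show ?thesis using nz K_dnn[OF n3, of U y] by (auto split: if_splits)
qed

lemma sum_restrict:
  assumes "A \<subseteq> S" "\<And>x. x \<in> S \<Longrightarrow> x \<notin> A \<Longrightarrow> f x = 0"
  shows "(\<Sum>x\<in>S. f x) = (\<Sum>x\<in>A. f x)"
  by (rule sum.mono_neutral_right) (use assms in auto)

abbreviation "aa \<equiv> 1 / (2 * (real n - 1))"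

lemma pist_int: "2 \<le> i \<Longrightarrow> i \<le> n - 1 \<Longrightarrow> pist (i,b) = aa"
proof -
  assume "2 \<le> i" "i \<le> n - 1"
  then have "i \<noteq> 1" "i \<noteq> n" "1 \<le> i" "i \<le> n" using n3 by auto
  then show ?thesis by (simp add: pist_def)
qed
lemma pist_1: "pist (1,b) = aa/2" using n3 by (simp add: pist_def)
lemma pist_n: "pist (n,b) = aa/2" using n3 by (simp add: pist_def)

lemma Ku12: "K (1,False) (2,False) = 1-p" using K_up1[OF n3, of U "(2,False)"] by simp
lemma Ku12T: "K (1,False) (2,True) = p" using K_up1[OF n3, of U "(2,True)"] by simp
lemma Kd11: "K (1,True) (1,False) = 1-p" using K_dn1[OF n3, of U "(1,False)"] by simp
lemma Kd11T: "K (1,True) (1,True) = p" using K_dn1[OF n3, of U "(1,True)"] by simp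
lemma Kunn: "K (n,False) (n,True) = 1-p" using K_upn[OF n3, of U "(n,True)"] by simp
lemma KunnF: "K (n,False) (n,False) = p" using K_upn[OF n3, of U "(n,False)"] by simp
lemma Kdnn: "K (n,True) (n-1,True) = 1-p" using K_dnn[OF n3, of U "(n-1,True)"] by simp
lemma KdnnF: "K (n,True) (n-1,False) = p" using K_dnn[OF n3, of U "(n-1,False)"] by simp

lemma flowF: assumes "2 \<le> j" "j \<le> n" shows "pist (j-1,False) * K (j-1,False) (j,False) = aa*(1-p)/2"
proof (cases "j = 2")
  case True
  have e: "(2::nat) - 1 = 1" by simp
  show ?thesis unfolding True e pist_1 Ku12 by simp
next
  case False
  have e: "j - 1 + 1 = j" using assms by simp
  have "K (j-1,False) (j-1+1,False) = (1-p)/2" by (rule Kuu1) (use assms False in auto)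
  then have k: "K (j-1,False) (j,False) = (1-p)/2" unfolding e .
  have pi: "pist (j-1,False) = aa" by (rule pist_int) (use assms False in auto)
  show ?thesis unfolding k pi by simp
qed

lemma flowT: assumes "1 \<le> j" "j \<le> n - 1" shows "pist (j+1,True) * K (j+1,True) (j,True) = aa*(1-p)/2"
proof (cases "j = n - 1")
  case True
  then have e: "j + 1 = n" using n3 by simp
  show ?thesis unfolding e unfolding True pist_n Kdnn by simp
next
  case False
  have e: "j + 1 - 1 = j" by simp
  have "K (j+1,True) (j+1-1,True) = (1-p)/2" by (rule Kdd1) (use assms False in auto)
  then have k: "K (j+1,True) (j,True) = (1-p)/2" unfolding e .
  have pi: "pist (j+1,True) = aa" by (rule pist_int) (use assms False in auto)
  show ?thesis unfolding k pi by simp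
qed

lemma flipUD: assumes "1 \<le> i" "i \<le> n - 1" shows "pist (i,False) * K (i,False) (i+1,True) = aa*p/2"
proof (cases "i = 1")
  case True
  have e: "(1::nat) + 1 = 2" by simp
  show ?thesis unfolding True e pist_1 Ku12T by simp
next
  case False
  have k: "K (i,False) (i+1,True) = p/2" by (rule Kud) (use assms False in auto)
  have pi: "pist (i,False) = aa" by (rule pist_int) (use assms False in auto)
  show ?thesis unfolding k pi by simp
qed

lemma flipDU: assumes "2 \<le> i" "i \<le> n" shows "pist (i,True) * K (i,True) (i-1,False) = aa*p/2"
proof (cases "i = n")
  case True
  show ?thesis unfolding True pist_n KdnnF by simp
next
  case False
  have k: "K (i,True) (i-1,False) = p/2" by (rule Kdu) (use assms False in auto)
  have pi: "pist (i,True) = aa" by (rule pist_int) (use assms False in auto)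
  show ?thesis unfolding k pi by simp
qed

lemma hs1: "a/2 + a*(1-q)/2 + a*q/2 = (a::real)" by (simp add: field_simps)
lemma hs2: "a/2*(1-q) + a*q/2 = (a::real)/2" by (simp add: field_simps)
lemma hs3: "a/2*q + a*(1-q)/2 = (a::real)/2" by (simp add: field_simps)

lemma pist_stat: assumes y: "y \<in> S" shows "(\<Sum>x\<in>S. pist x * K x y) = pist y"
  using y n3
proof (cases rule: state_cases)
  case (um j)
  let ?A = "{(j,False),(j-1,False),(j+1,True)}"
  have A: "?A \<subseteq> S" using um by (auto simp: mem_states)
  have z: "pist x * K x y = 0" if "x \<in> S" "x \<notin> ?A" for x
  proof (rule ccontr)
    assume "pist x * K x y \<noteq> 0"
    then have "K x y \<noteq> 0" by auto
    from K_supp[OF that(1) this] show False using that um by auto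
  qed
  have d: "(j,False) \<noteq> (j-1,False)" "(j,False) \<noteq> (j+1,True)" "(j-1,False) \<noteq> (j+1,True)" using um by auto
  have f1: "pist (j-1,False) * K (j-1,False) (j,False) = aa*(1-p)/2" by (rule flowF) (use um in auto)
  have f2: "pist (j+1,True) * K (j+1,True) (j+1-1,False) = aa*p/2" by (rule flipDU) (use um in auto)
  have st: "pist (j,False) * K (j,False) (j,False) = aa/2" unfolding pist_int[OF um(2,3)] Kuu[OF um(2,3)] by simp
  have "(\<Sum>x\<in>S. pist x * K x y) = (\<Sum>x\<in>?A. pist x * K x y)" by (rule sum_restrict[OF A z])
  also have "\<dots> = aa/2 + aa*(1-p)/2 + aa*p/2" unfolding sum3_ge[OF d] um(1) using f1 f2 st by simp
  also have "\<dots> = pist y" unfolding um(1) pist_int[OF um(2,3)] hs1 ..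
  finally show ?thesis .
next
  case (dm j)
  let ?A = "{(j,True),(j+1,True),(j-1,False)}"
  have A: "?A \<subseteq> S" using dm by (auto simp: mem_states)
  have z: "pist x * K x y = 0" if "x \<in> S" "x \<notin> ?A" for x
  proof (rule ccontr)
    assume "pist x * K x y \<noteq> 0"
    then have "K x y \<noteq> 0" by auto
    from K_supp[OF that(1) this] show False using that dm by auto
  qed
  have d: "(j,True) \<noteq> (j+1,True)" "(j,True) \<noteq> (j-1,False)" "(j+1,True) \<noteq> (j-1,False)" using dm by auto
  have f1: "pist (j+1,True) * K (j+1,True) (j,True) = aa*(1-p)/2" by (rule flowT) (use dm in auto)
  have f2: "pist (j-1,False) * K (j-1,False) (j-1+1,True) = aa*p/2" by (rule flipUD) (use dm in auto)
  have st: "pist (j,True) * K (j,True) (j,True) = aa/2" unfolding pist_int[OF dm(2,3)] Kdd[OF dm(2,3)] by simp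
  have "(\<Sum>x\<in>S. pist x * K x y) = (\<Sum>x\<in>?A. pist x * K x y)" by (rule sum_restrict[OF A z])
  also have "\<dots> = aa/2 + aa*(1-p)/2 + aa*p/2" unfolding sum3_ge[OF d] dm(1) using f1 f2 st dm by simp
  also have "\<dots> = pist y" unfolding dm(1) pist_int[OF dm(2,3)] hs1 ..
  finally show ?thesis .
next
  case u1
  let ?A = "{(1,True),(2,True)}"
  have A: "?A \<subseteq> S" using n3 by (auto simp: mem_states)
  have z: "pist x * K x y = 0" if "x \<in> S" "x \<notin> ?A" for x
  proof (rule ccontr)
    assume "pist x * K x y \<noteq> 0"
    then have "K x y \<noteq> 0" by auto
    from K_supp[OF that(1) this] show False using that u1 n3 by auto
  qed
  have f2': "pist (2,True) * K (2,True) (2-1,False) = aa*p/2" by (rule flipDU) (use n3 in auto)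
  have e2: "(2::nat) - 1 = 1" by simp
  have f2: "pist (2,True) * K (2,True) (1,False) = aa*p/2" using f2' unfolding e2 .
  have f1: "pist (1,True) * K (1,True) (1,False) = aa/2*(1-p)" unfolding pist_1 Kd11 Kd11T by simp
  have "(\<Sum>x\<in>S. pist x * K x y) = (\<Sum>x\<in>?A. pist x * K x y)" by (rule sum_restrict[OF A z])
  also have "\<dots> = aa/2*(1-p) + aa*p/2" unfolding u1 using f1 f2 by simp
  also have "\<dots> = pist y" unfolding u1 pist_1 hs2 ..
  finally show ?thesis .
next
  case d1
  let ?A = "{(1,True),(2,True)}"
  have A: "?A \<subseteq> S" using n3 by (auto simp: mem_states)
  have z: "pist x * K x y = 0" if "x \<in> S" "x \<notin> ?A" for x
  proof (rule ccontr)
    assume "pist x * K x y \<noteq> 0"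
    then have "K x y \<noteq> 0" by auto
    from K_supp[OF that(1) this] show False using that d1 n3 by auto
  qed
  have f2': "pist (1+1,True) * K (1+1,True) (1,True) = aa*(1-p)/2" by (rule flowT) (use n3 in auto)
  have e2: "(1::nat) + 1 = 2" by simp
  have f2: "pist (2,True) * K (2,True) (1,True) = aa*(1-p)/2" using f2' unfolding e2 .
  have f1: "pist (1,True) * K (1,True) (1,True) = aa/2*p" unfolding pist_1 Kd11 Kd11T by simp
  have "(\<Sum>x\<in>S. pist x * K x y) = (\<Sum>x\<in>?A. pist x * K x y)" by (rule sum_restrict[OF A z])
  also have "\<dots> = aa/2*p + aa*(1-p)/2" unfolding d1 using f1 f2 by simp
  also have "\<dots> = pist y" unfolding d1 pist_1 hs3 ..
  finally show ?thesis .
next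
  case un
  let ?A = "{(n,False),(n-1,False)}"
  have A: "?A \<subseteq> S" using n3 by (auto simp: mem_states)
  have z: "pist x * K x y = 0" if "x \<in> S" "x \<notin> ?A" for x
  proof (rule ccontr)
    assume "pist x * K x y \<noteq> 0"
    then have "K x y \<noteq> 0" by auto
    from K_supp[OF that(1) this] show False using that un n3 by auto
  qed
  have f2: "pist (n-1,False) * K (n-1,False) (n,False) = aa*(1-p)/2" by (rule flowF) (use n3 in auto)
  have f1: "pist (n,False) * K (n,False) (n,False) = aa/2*p" unfolding pist_n Kunn KunnF by simp
  have d: "(n,False) \<noteq> (n-1,False)" using n3 by simp
  have "(\<Sum>x\<in>S. pist x * K x y) = (\<Sum>x\<in>?A. pist x * K x y)" by (rule sum_restrict[OF A z])
  also have "\<dots> = aa/2*p + aa*(1-p)/2" unfolding un using f1 f2 d by simp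
  also have "\<dots> = pist y" unfolding un pist_n hs3 ..
  finally show ?thesis .
next
  case dn
  let ?A = "{(n,False),(n-1,False)}"
  have A: "?A \<subseteq> S" using n3 by (auto simp: mem_states)
  have z: "pist x * K x y = 0" if "x \<in> S" "x \<notin> ?A" for x
  proof (rule ccontr)
    assume "pist x * K x y \<noteq> 0"
    then have "K x y \<noteq> 0" by auto
    from K_supp[OF that(1) this] show False using that dn n3 by auto
  qed
  have e: "n - 1 + 1 = n" using n3 by simp
  have f2: "pist (n-1,False) * K (n-1,False) (n-1+1,True) = aa*p/2" by (rule flipUD) (use n3 in auto)
  have f1: "pist (n,False) * K (n,False) (n,True) = aa/2*(1-p)" unfolding pist_n Kunn KunnF by simp
  have d: "(n,False) \<noteq> (n-1,False)" using n3 by simp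
  have "(\<Sum>x\<in>S. pist x * K x y) = (\<Sum>x\<in>?A. pist x * K x y)" by (rule sum_restrict[OF A z])
  also have "\<dots> = aa/2*(1-p) + aa*p/2" unfolding dn using f1 f2 d e by simp
  also have "\<dots> = pist y" unfolding dn pist_n hs2 ..
  finally show ?thesis .
qed

lemma pist_nn: "pist x \<ge> 0" using n3 by (simp add: pist_def)
lemma pist_out: "x \<notin> S \<Longrightarrow> pist x = 0" by (cases x) (auto simp: pist_def mem_states)

lemma hs4: "2*(a/2) + 2*(a/2) + (\<Sum>i\<in>A. 2 * a) = a * (2 + 2 * (\<Sum>i\<in>A. 1))" for a :: real
  by (simp add: algebra_simps sum_distrib_left)

lemma pist_sum: "(\<Sum>x\<in>S. pist x) = 1"
proof -
  have "(\<Sum>x\<in>S. pist x) = (\<Sum>i\<in>{1..n}. \<Sum>b\<in>UNIV. pist (i,b))"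
    unfolding states_def by (simp add: sum.cartesian_product)
  also have "\<dots> = (\<Sum>i\<in>{1..n}. 2 * pist (i,False))"
    by (intro sum.cong refl) (simp add: UNIV_bool pist_def)
  also have "{1..n} = insert 1 (insert n {2..n-1})" using n3 by auto
  also have "(\<Sum>i\<in>insert 1 (insert n {2..n-1}). 2 * pist (i,False)) = 2 * (aa/2) + 2 * (aa/2) + (\<Sum>i\<in>{2..n-1}. 2 * aa)"
    using n3 pist_1[simplified] by (simp add: pist_n pist_int)
  also have "\<dots> = aa * (2 + 2 * (real n - 2))"
  proof -
    have "card {2..n-1} = n - 2" by simp
    then have c: "(\<Sum>i\<in>{2..n-1}. (1::real)) = real n - 2" using n3 by (simp add: of_nat_diff)
    show ?thesis unfolding hs4 c ..
  qed
  also have "\<dots> = 1"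
  proof -
    have "real n - 1 > 0" using n3 by simp
    then show ?thesis by (simp add: field_simps)
  qed
  finally show ?thesis .
qed

lemma pist_is_stat: "is_stationary n U pist"
  unfolding is_stationary_def using pist_nn pist_out pist_sum pist_stat by auto

end


context ch begin

definition doeblin :: "nat \<Rightarrow> real \<Rightarrow> (nat \<times> bool \<Rightarrow> real) \<Rightarrow> bool" where
  "doeblin T \<delta> \<nu> \<longleftrightarrow> \<delta> > 0 \<and> (\<forall>y\<in>S. \<nu> y \<ge> 0) \<and> (\<Sum>y\<in>S. \<nu> y) = 1 \<and> (\<forall>x\<in>S. \<forall>y\<in>S. P T x y \<ge> \<delta> * \<nu> y)"

lemma P_le1: "x \<in> S \<Longrightarrow> y \<in> S \<Longrightarrow> P t x y \<le> 1"
  using P_row[of x t] member_le_sum[of y S "P t x"] P_nn by fastforce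

lemma contract:
  assumes D: "doeblin T \<delta> \<nu>" and e0: "(\<Sum>x\<in>S. e x) = 0"
  shows "(\<Sum>y\<in>S. \<bar>\<Sum>x\<in>S. e x * P T x y\<bar>) \<le> (1 - \<delta>) * (\<Sum>x\<in>S. \<bar>e x\<bar>)"
proof -
  have pos: "P T x y - \<delta> * \<nu> y \<ge> 0" if "x \<in> S" "y \<in> S" for x y using D that by (auto simp: doeblin_def)
  have "(\<Sum>y\<in>S. \<bar>\<Sum>x\<in>S. e x * P T x y\<bar>) = (\<Sum>y\<in>S. \<bar>\<Sum>x\<in>S. e x * (P T x y - \<delta> * \<nu> y)\<bar>)"
  proof (intro sum.cong refl)
    fix y
    have "(\<Sum>x\<in>S. e x * (P T x y - \<delta> * \<nu> y)) = (\<Sum>x\<in>S. e x * P T x y) - (\<Sum>x\<in>S. e x) * (\<delta> * \<nu> y)"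
      by (simp add: right_diff_distrib sum_subtractf sum_distrib_right)
    then show "\<bar>\<Sum>x\<in>S. e x * P T x y\<bar> = \<bar>\<Sum>x\<in>S. e x * (P T x y - \<delta> * \<nu> y)\<bar>" using e0 by simp
  qed
  also have "\<dots> \<le> (\<Sum>y\<in>S. \<Sum>x\<in>S. \<bar>e x\<bar> * (P T x y - \<delta> * \<nu> y))"
  proof (intro sum_mono)
    fix y assume y: "y \<in> S"
    have "\<bar>\<Sum>x\<in>S. e x * (P T x y - \<delta> * \<nu> y)\<bar> \<le> (\<Sum>x\<in>S. \<bar>e x * (P T x y - \<delta> * \<nu> y)\<bar>)" by (rule sum_abs)
    also have "\<dots> = (\<Sum>x\<in>S. \<bar>e x\<bar> * (P T x y - \<delta> * \<nu> y))"
      using pos y by (intro sum.cong refl) (simp add: abs_mult)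
    finally show "\<bar>\<Sum>x\<in>S. e x * (P T x y - \<delta> * \<nu> y)\<bar> \<le> (\<Sum>x\<in>S. \<bar>e x\<bar> * (P T x y - \<delta> * \<nu> y))" .
  qed
  also have "\<dots> = (\<Sum>x\<in>S. \<bar>e x\<bar> * ((\<Sum>y\<in>S. P T x y) - \<delta> * (\<Sum>y\<in>S. \<nu> y)))"
    by (subst sum.swap) (simp add: sum_distrib_left sum_subtractf right_diff_distrib)
  also have "\<dots> = (\<Sum>x\<in>S. \<bar>e x\<bar> * (1 - \<delta>))"
    using D by (intro sum.cong refl) (simp add: P_row doeblin_def)
  also have "\<dots> = (1 - \<delta>) * (\<Sum>x\<in>S. \<bar>e x\<bar>)" by (simp add: sum_distrib_left mult.commute)
  finally show ?thesis .
qed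

lemma mass_pres: "(\<Sum>y\<in>S. \<Sum>x\<in>S. e x * P s x y) = (\<Sum>x\<in>S. e x)"
  by (subst sum.swap) (simp add: sum_distrib_left[symmetric] P_row)

lemma stat_P: assumes st: "is_stationary n U \<pi>" and y: "y \<in> S"
  shows "(\<Sum>x\<in>S. \<pi> x * P t x y) = \<pi> y"
  using y
proof (induction t arbitrary: y)
  case 0
  have "(\<Sum>x\<in>S. \<pi> x * P 0 x y) = (\<Sum>x\<in>S. if x = y then \<pi> y else 0)"
    by (intro sum.cong refl) (auto simp: P_0)
  then show ?case using 0 by simp
next
  case (Suc t)
  have "(\<Sum>x\<in>S. \<pi> x * P (Suc t) x y) = (\<Sum>w\<in>S. (\<Sum>x\<in>S. \<pi> x * P t x w) * K w y)"
    by (simp add: P_Suc sum_distrib_left sum_distrib_right mult.assoc) (rule sum.swap)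
  also have "\<dots> = (\<Sum>w\<in>S. \<pi> w * K w y)" using Suc.IH by (intro sum.cong refl) auto
  also have "\<dots> = \<pi> y" using st Suc.prems by (auto simp: is_stationary_def)
  finally show ?case .
qed

lemma conv_main:
  assumes D: "doeblin T \<delta> \<nu>" and st: "is_stationary n U \<pi>"
    and z: "\<forall>x\<in>S. z0 x \<ge> 0" and F: "F = (\<Sum>x\<in>S. z0 x)" and y: "y \<in> S"
  shows "\<bar>evolve n U z0 t y - \<pi> y * F\<bar> \<le> 2 * F * (1 - \<delta>) ^ (t div T)"
proof -
  define e0 where "e0 x = z0 x - F * \<pi> x" for x
  define E where "E k w = (\<Sum>x\<in>S. e0 x * P (k * T) x w)" for k w
  have pi1: "(\<Sum>x\<in>S. \<pi> x) = 1" using st by (simp add: is_stationary_def)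
  have pinn: "\<forall>x\<in>S. \<pi> x \<ge> 0" using st by (simp add: is_stationary_def)
  have Fnn: "F \<ge> 0" using F z by (simp add: sum_nonneg)
  have e0sum: "(\<Sum>x\<in>S. e0 x) = 0" unfolding e0_def using F pi1 by (simp add: sum_subtractf sum_distrib_left[symmetric])
  have e0abs: "(\<Sum>x\<in>S. \<bar>e0 x\<bar>) \<le> 2 * F"
  proof -
    have "(\<Sum>x\<in>S. \<bar>e0 x\<bar>) \<le> (\<Sum>x\<in>S. z0 x + F * \<pi> x)"
      unfolding e0_def using z pinn Fnn by (intro sum_mono) (auto simp: abs_le_iff)
    also have "\<dots> = 2 * F" using F pi1 by (simp add: sum.distrib sum_distrib_left[symmetric])
    finally show ?thesis .
  qed
  have Esum: "(\<Sum>w\<in>S. E k w) = 0" for k unfolding E_def using mass_pres[of e0 "k*T"] e0sum by simp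
  have Erec: "E (Suc k) y = (\<Sum>w\<in>S. E k w * P T w y)" if "y \<in> S" for k y
  proof -
    have "E (Suc k) y = (\<Sum>x\<in>S. e0 x * (\<Sum>w\<in>S. P (k*T) x w * P T w y))"
      unfolding E_def using that by (simp add: P_add[symmetric] add.commute)
    also have "\<dots> = (\<Sum>w\<in>S. E k w * P T w y)"
      unfolding E_def by (simp add: sum_distrib_left sum_distrib_right mult.assoc) (rule sum.swap)
    finally show ?thesis .
  qed
  have Enorm: "(\<Sum>w\<in>S. \<bar>E k w\<bar>) \<le> (1-\<delta>)^k * (2 * F)" for k
  proof (induction k)
    case 0
    have "E 0 w = e0 w" if "w \<in> S" for w
    proof -
      have "E 0 w = (\<Sum>x\<in>S. if x = w then e0 w else 0)" unfolding E_def by (intro sum.cong refl) (auto simp: P_0)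
      then show ?thesis using that by simp
    qed
    then show ?case using e0abs by simp
  next
    case (Suc k)
    have d1: "1 - \<delta> \<ge> 0"
    proof -
      obtain x0 where x0: "x0 \<in> S" using n3 by (meson mem_states one_le_numeral order.trans le_refl)
      have "\<delta> = \<delta> * (\<Sum>y\<in>S. \<nu> y)" using D by (simp add: doeblin_def)
      also have "\<dots> = (\<Sum>y\<in>S. \<delta> * \<nu> y)" by (simp add: sum_distrib_left)
      also have "\<dots> \<le> (\<Sum>y\<in>S. P T x0 y)" using D x0 by (intro sum_mono) (simp add: doeblin_def)
      also have "\<dots> = 1" using x0 by (simp add: P_row)
      finally show ?thesis by simp
    qed
    have "(\<Sum>w\<in>S. \<bar>E (Suc k) w\<bar>) = (\<Sum>w\<in>S. \<bar>\<Sum>v\<in>S. E k v * P T v w\<bar>)" by (intro sum.cong refl) (simp add: Erec)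
    also have "\<dots> \<le> (1-\<delta>) * (\<Sum>v\<in>S. \<bar>E k v\<bar>)" by (rule contract[OF D Esum])
    also have "\<dots> \<le> (1-\<delta>) * ((1-\<delta>)^k * (2*F))" using Suc d1 by (intro mult_left_mono)
    finally show ?case by simp
  qed
  define k where "k = t div T"
  define s where "s = t mod T"
  have ts: "t = k * T + s" by (simp add: k_def s_def)
  have "evolve n U z0 t y - \<pi> y * F = (\<Sum>x\<in>S. e0 x * P t x y)"
  proof -
    have "(\<Sum>x\<in>S. e0 x * P t x y) = (\<Sum>x\<in>S. z0 x * P t x y) - F * (\<Sum>x\<in>S. \<pi> x * P t x y)"
      unfolding e0_def by (simp add: left_diff_distrib sum_subtractf sum_distrib_left mult.assoc)
    then show ?thesis using evolve_lin[OF y, of z0 t] stat_P[OF st y, of t] by (simp add: mult.commute)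
  qed
  also have "\<dots> = (\<Sum>w\<in>S. E k w * P s w y)"
    unfolding ts E_def P_add[OF y] by (simp add: sum_distrib_left sum_distrib_right mult.assoc) (rule sum.swap)
  finally have eq: "evolve n U z0 t y - \<pi> y * F = (\<Sum>w\<in>S. E k w * P s w y)" .
  have "\<bar>\<Sum>w\<in>S. E k w * P s w y\<bar> \<le> (\<Sum>w\<in>S. \<bar>E k w\<bar>)"
  proof -
    have "\<bar>\<Sum>w\<in>S. E k w * P s w y\<bar> \<le> (\<Sum>w\<in>S. \<bar>E k w * P s w y\<bar>)" by (rule sum_abs)
    also have "\<dots> \<le> (\<Sum>w\<in>S. \<bar>E k w\<bar>)"
    proof (intro sum_mono)
      fix w assume w: "w \<in> S"
      have "\<bar>E k w * P s w y\<bar> = \<bar>E k w\<bar> * P s w y" using P_nn by (simp add: abs_mult)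
      also have "\<dots> \<le> \<bar>E k w\<bar> * 1" using P_le1[OF w y] by (intro mult_left_mono) auto
      finally show "\<bar>E k w * P s w y\<bar> \<le> \<bar>E k w\<bar>" by simp
    qed
    finally show ?thesis .
  qed
  then show ?thesis using eq Enorm[of k] by (simp add: k_def mult_ac)
qed

lemma doeblin_le1: assumes D: "doeblin T \<delta> \<nu>" shows "\<delta> \<le> 1"
proof -
  have x0: "(1,False) \<in> S" using n3 by (simp add: mem_states)
  have "\<delta> = \<delta> * (\<Sum>y\<in>S. \<nu> y)" using D by (simp add: doeblin_def)
  also have "\<dots> = (\<Sum>y\<in>S. \<delta> * \<nu> y)" by (simp add: sum_distrib_left)
  also have "\<dots> \<le> (\<Sum>y\<in>S. P T (1,False) y)" using D x0 by (intro sum_mono) (simp add: doeblin_def)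
  also have "\<dots> = 1" using x0 by (simp add: P_row)
  finally show ?thesis .
qed

lemma evolve_stat: assumes st: "is_stationary n U \<pi>" and y: "y \<in> S"
  shows "evolve n U \<pi> t y = \<pi> y"
  using evolve_lin[OF y, of \<pi> t] stat_P[OF st y, of t] by simp

lemma stat_unique:
  assumes D: "doeblin T \<delta> \<nu>" and T: "T \<ge> 1" and s1: "is_stationary n U \<pi>1" and s2: "is_stationary n U \<pi>2"
  shows "\<pi>1 = \<pi>2"
proof
  fix y
  show "\<pi>1 y = \<pi>2 y"
  proof (cases "y \<in> S")
    case False
    have "\<pi>1 y = 0" "\<pi>2 y = 0" using s1 s2 False unfolding is_stationary_def by blast+
    then show ?thesis by simp
  next
    case y: True
    have z: "\<forall>x\<in>S. \<pi>1 x \<ge> 0" and F: "1 = (\<Sum>x\<in>S. \<pi>1 x)" using s1 by (auto simp: is_stationary_def)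
    have b: "\<bar>\<pi>1 y - \<pi>2 y\<bar> \<le> 2 * (1-\<delta>)^k" for k
    proof -
      have "\<bar>evolve n U \<pi>1 (k*T) y - \<pi>2 y * 1\<bar> \<le> 2 * 1 * (1 - \<delta>) ^ (k*T div T)"
        by (rule conv_main[OF D s2 z F y])
      then show ?thesis using evolve_stat[OF s1 y] T by simp
    qed
    show ?thesis
    proof (rule ccontr)
      assume ne: "\<pi>1 y \<noteq> \<pi>2 y"
      then have pos: "\<bar>\<pi>1 y - \<pi>2 y\<bar> / 2 > 0" by simp
      have "1 - \<delta> < 1" using D by (simp add: doeblin_def)
      then obtain k where "(1-\<delta>)^k < \<bar>\<pi>1 y - \<pi>2 y\<bar> / 2" using real_arch_pow_inv[OF pos] by blast
      then show False using b[of k] by simp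
    qed
  qed
qed

lemma stat_dist_eq: assumes D: "doeblin T \<delta> \<nu>" and T: "T \<ge> 1"
  shows "stat_dist n U = pist"
  unfolding stat_dist_def
proof (rule the_equality)
  show "is_stationary n U pist" by (rule pist_is_stat)
  fix q assume "is_stationary n U q"
  then show "q = pist" using stat_unique[OF D T _ pist_is_stat] by blast
qed

lemma final_bound:
  assumes D: "doeblin T \<delta> \<nu>" and T: "T \<ge> 1" and TA: "real T \<le> A * real n"
    and d0: "0 < \<delta>0" "\<delta>0 \<le> \<delta>"
    and z: "\<forall>x\<in>S. z0 x \<ge> 0" and F: "F = (\<Sum>x\<in>S. z0 x)" and Fp: "F > 0"
    and eps: "0 < eps" "eps \<le> 1/2"
    and t: "real t \<ge> (A * (2 / \<delta>0 + 1)) * real n * ln (real n / eps)"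
    and x: "x \<in> S"
  shows "\<bar>evolve n U z0 t x - stat_dist n U x * F\<bar> \<le> eps / (2 * real n) * F"
proof -
  have sd: "stat_dist n U = pist" by (rule stat_dist_eq[OF D T])
  define k where "k = t div T"
  define L where "L = ln (real n / eps)"
  have npos: "real n > 0" using n3 by simp
  have A0: "A > 0" using TA T npos by (smt (verit) mult_nonpos_nonneg of_nat_0_le_iff of_nat_1 of_nat_mono)
  have ne6: "real n / eps \<ge> 6"
  proof -
    have "real n / eps \<ge> 3 / (1/2)" using n3 eps by (intro frac_le) auto
    then show ?thesis by simp
  qed
  have L1: "L \<ge> 1"
  proof -
    have "exp 1 \<le> real n / eps" using exp_le ne6 by linarith
    then have "ln (exp 1) \<le> ln (real n / eps)" using npos eps by (subst ln_le_cancel_iff) auto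
    then show ?thesis by (simp add: L_def)
  qed
  have L4: "ln 4 \<le> L"
    unfolding L_def using ne6 by (subst ln_le_cancel_iff) auto
  have d1: "\<delta> \<le> 1" by (rule doeblin_le1[OF D])
  have main: "\<bar>evolve n U z0 t x - pist x * F\<bar> \<le> 2 * F * (1 - \<delta>) ^ k"
    using conv_main[OF D pist_is_stat z F x] by (simp add: k_def)
  have kbound: "real k \<ge> real t / real T - 1"
  proof -
    have "t < (t div T + 1) * T" using T by (metis add.commute div_mult_mod_eq less_add_same_cancel1 mod_less_divisor mult_Suc nat_add_left_cancel_less not_one_le_zero plus_1_eq_Suc zero_less_iff_neq_zero)
    then have "real t < (real k + 1) * real T" unfolding k_def by (metis of_nat_1 of_nat_add of_nat_less_iff of_nat_mult)
    then show ?thesis using T by (simp add: field_simps)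
  qed
  have "real t / real T \<ge> (A * (2 / \<delta>0 + 1)) * real n * L / (A * real n)"
  proof -
    have tT: "real T > 0" using T by simp
    have "(A * (2 / \<delta>0 + 1)) * real n * L / (A * real n) \<le> (A * (2 / \<delta>0 + 1)) * real n * L / real T"
      using TA tT A0 npos L1 d0 by (intro divide_left_mono) (auto intro!: mult_pos_pos add_pos_pos)
    also have "\<dots> \<le> real t / real T" using t tT by (intro divide_right_mono) (auto simp: L_def)
    finally show ?thesis .
  qed
  also have "(A * (2 / \<delta>0 + 1)) * real n * L / (A * real n) = (2 / \<delta>0 + 1) * L"
    using A0 npos by (simp add: field_simps)
  finally have kL: "real k \<ge> (2 / \<delta>0 + 1) * L - 1" using kbound by linarith
  have "\<delta>0 * real k \<ge> 2 * L"
  proof -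
    have "\<delta>0 * real k \<ge> \<delta>0 * ((2 / \<delta>0 + 1) * L - 1)" using kL d0 by (intro mult_left_mono) auto
    also have "\<delta>0 * ((2 / \<delta>0 + 1) * L - 1) = 2 * L + \<delta>0 * (L - 1)" using d0 by (simp add: field_simps)
    finally show ?thesis using L1 d0 by (smt (verit) mult_nonneg_nonneg)
  qed
  then have dk: "\<delta> * real k \<ge> ln 4 + L" using L4 d0 by (smt (verit) mult_right_mono of_nat_0_le_iff)
  have "(1 - \<delta>) ^ k \<le> exp (- \<delta>) ^ k"
    using d1 by (intro power_mono) (auto simp: exp_ge_add_one_self[of "-\<delta>", simplified])
  also have "\<dots> = exp (- (\<delta> * real k))" by (simp add: exp_of_nat_mult[symmetric] mult.commute)
  also have "\<dots> \<le> exp (- (ln 4 + L))" using dk by simp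
  also have "\<dots> = eps / (4 * real n)"
  proof -
    have e1: "exp (ln 4 + L) = 4 * (real n / eps)" unfolding L_def exp_add using npos eps by simp
    show ?thesis unfolding exp_minus e1 using npos eps by (simp add: field_simps)
  qed
  finally have "(1 - \<delta>) ^ k \<le> eps / (4 * real n)" .
  then have "2 * F * (1 - \<delta>) ^ k \<le> 2 * F * (eps / (4 * real n))" using Fp by (intro mult_left_mono) auto
  also have "\<dots> = eps / (2 * real n) * F" by (simp add: field_simps)
  finally show ?thesis using main sd by simp
qed

end


lemma one_minus_ge_exp: fixes x :: real assumes "0 \<le> x" "x \<le> 1/2" shows "exp (-2*x) \<le> 1 - x"
proof -
  have "exp (2*x) \<ge> 1 + 2*x" by (rule exp_ge_add_one_self)
  then have "exp (-2*x) \<le> 1 / (1 + 2*x)"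
    using assms by (simp add: exp_minus field_simps)
  also have "\<dots> \<le> 1 - x"
  proof -
    have pos: "1 + 2*x > 0" using assms by simp
    have "x * (1 - 2*x) \<ge> 0" by (rule mult_nonneg_nonneg) (use assms in auto)
    then have "1 \<le> (1 - x) * (1 + 2*x)" by (simp add: algebra_simps)
    then show ?thesis using pos by (simp add: divide_le_eq)
  qed
  finally show ?thesis .
qed

locale chL = ch +
  fixes c :: real
  assumes c1: "c \<ge> 1" and Ulo: "real n / c \<le> real U" and Uhi: "real U \<le> c * real n"
    and nbig: "n \<ge> 5120"
begin

definition "q = n div 40"
definition "\<beta> = exp (-8*c) / (4*c)"

lemma q_facts: "real q \<ge> 128" "40 * real q \<le> real n" "real n \<le> 40 * real q + 39"
proof -
  have "40 * q \<le> n" "n < 40 * q + 40" unfolding q_def by auto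
  moreover have "q \<ge> 128" using nbig unfolding q_def by auto
  ultimately show "real q \<ge> 128" "40 * real q \<le> real n" "real n \<le> 40 * real q + 39" by linarith+
qed

lemma beta_pos: "\<beta> > 0" using c1 by (simp add: \<beta>_def)
lemma beta_le: "\<beta> \<le> 1"
proof -
  have "exp (-8*c) \<le> 1" using c1 by simp
  then have "exp (-8*c) \<le> 4*c" using c1 by linarith
  then show ?thesis using c1 unfolding \<beta>_def by (simp add: pos_divide_le_eq)
qed

lemma pn: "p * real n \<le> c" and pge: "p \<ge> 1 / (c * real n)"
proof -
  have Upos: "real U > 0" using U3 by simp
  have "real n \<le> c * real U" using Ulo c1 by (simp add: field_simps)
  then show "p * real n \<le> c" using Upos by (simp add: field_simps)
  show "p \<ge> 1 / (c * real n)" using Uhi Upos c1 n3 by (simp add: field_simps)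
qed

lemma pow_bound: assumes "t \<le> m * n" shows "(1-p)^t \<ge> exp (-2 * real m * c)"
proof -
  have "exp (-2 * real m * c) \<le> exp (-2 * p * real t)"
  proof -
    have "p * real t \<le> p * (real m * real n)" using assms p01 by (intro mult_left_mono) (auto simp: of_nat_mult[symmetric] simp del: of_nat_mult)
    also have "\<dots> = real m * (p * real n)" by simp
    also have "\<dots> \<le> real m * c" using pn by (intro mult_left_mono) auto
    finally show ?thesis by simp
  qed
  also have "\<dots> = exp (-2 * p) ^ t" by (simp add: exp_of_nat_mult[symmetric] mult_ac)
  also have "\<dots> \<le> (1-p)^t" using p01 p_le by (intro power_mono one_minus_ge_exp) auto
  finally show ?thesis .
qed

lemma stage_bound:
  assumes "t \<le> 4 * n" "real t \<le> real q ^ 2"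
  shows "p * (1-p)^t * (1/2 - real t / (4 * real q ^ 2)) \<ge> \<beta> / real n"
proof -
  have q0: "real q > 0" using q_facts by simp
  have a: "1/2 - real t / (4 * real q ^ 2) \<ge> 1/4" using assms(2) q0 by (simp add: field_simps)
  have b: "(1-p)^t \<ge> exp (-8*c)" using pow_bound[of t 4] assms(1) by simp
  have "\<beta> / real n = (1 / (c * real n)) * exp (-8*c) * (1/4)" unfolding \<beta>_def using n3 c1 by (simp add: field_simps)
  also have "\<dots> \<le> p * (1-p)^t * (1/2 - real t / (4 * real q ^ 2))"
    using pge b a c1 n3 p01 by (intro mult_mono) (auto intro: mult_nonneg_nonneg)
  finally show ?thesis .
qed

lemma cross_bound:
  assumes "t \<ge> 2" "real t \<le> real q ^ 2"
  shows "(1-p)^(2*n) * (1 - (real t - 2) / (4 * real q ^ 2)) \<ge> \<beta>"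
proof -
  have q0: "real q > 0" using q_facts by simp
  have "real q ^ 2 \<ge> 0" by simp
  then have h: "real t - 2 \<le> 3 * real q ^ 2" using assms(2) by linarith
  have "(real t - 2) / (4 * real q ^ 2) \<le> 3/4" using h q0 by (simp add: divide_le_eq)
  then have a: "1 - (real t - 2) / (4 * real q ^ 2) \<ge> 1/4" by simp
  have b: "(1-p)^(2*n) \<ge> exp (-4*c)" using pow_bound[of "2*n" 2] by simp
  have "\<beta> \<le> exp (-4*c) * (1/4)"
  proof -
    have "exp (-8*c) \<le> exp (-4*c)" using c1 by simp
    have "exp (-8*c) / (4*c) \<le> exp (-8*c) / 4" using c1 by (intro divide_left_mono) auto
    then show ?thesis unfolding \<beta>_def using \<open>exp (-8*c) \<le> exp (-4*c)\<close> by linarith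
  qed
  also have "\<dots> \<le> (1-p)^(2*n) * (1 - (real t - 2) / (4 * real q ^ 2))"
    using a b by (intro mult_mono) auto
  finally show ?thesis .
qed

end


context chL begin

lemma qsq: "real q ^ 2 \<ge> 128 * real q"
proof -
  have "real q * real q \<ge> 128 * real q" using q_facts by (intro mult_right_mono) auto
  then show ?thesis by (simp add: power2_eq_square)
qed

lemmas qf = q_facts qsq

lemma St1: assumes "4*q \<le> i" "i \<le> 6*q" "8*q \<le> j" "j \<le> 10*q" "14*q+4 \<le> t" "t \<le> 126*q - 4"
  shows "P t (i,False) (j,True) \<ge> \<beta> / real n"
proof -
  have "P t (i,False) (j,True) \<ge> p * (1-p)^t * (1/2 - real t / (4 * real q^2))"
    by (rule Lud_win) (use assms qf in linarith)+
  moreover have "p * (1-p)^t * (1/2 - real t / (4 * real q ^ 2)) \<ge> \<beta> / real n"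
    by (rule stage_bound) (use assms qf in linarith)+
  ultimately show ?thesis by linarith
qed

lemma St2: assumes "8*q \<le> i" "i \<le> 10*q" "4*q \<le> j" "j \<le> 6*q" "14*q+4 \<le> t" "t \<le> 22*q - 8"
  shows "P t (i,True) (j,False) \<ge> \<beta> / real n"
proof -
  have "P t (i,True) (j,False) \<ge> p * (1-p)^t * (1/2 - real t / (4 * real q^2))"
    by (rule Ldu_win) (use assms qf in linarith)+
  moreover have "p * (1-p)^t * (1/2 - real t / (4 * real q ^ 2)) \<ge> \<beta> / real n"
    by (rule stage_bound) (use assms qf in linarith)+
  ultimately show ?thesis by linarith
qed

lemma St3: assumes "2 \<le> i" "i \<le> 32*q" "8*q \<le> j" "j \<le> 10*q"
  shows "P (60*q) (i,False) (j,True) \<ge> \<beta> / real n"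
proof -
  have "P (60*q) (i,False) (j,True) \<ge> p * (1-p)^(60*q) * (1/2 - real (60*q) / (4 * real q^2))"
    by (rule Lud_win) (use assms qf in linarith)+
  moreover have "p * (1-p)^(60*q) * (1/2 - real (60*q) / (4 * real q ^ 2)) \<ge> \<beta> / real n"
    by (rule stage_bound) (use assms qf in linarith)+
  ultimately show ?thesis by linarith
qed

lemma St4: assumes "32*q < i" "i \<le> n - 1"
  shows "(\<Sum>k\<in>{19*q..21*q}. P (4*n - 2*i - 40*q) (i,False) (k,True)) \<ge> \<beta>"
proof -
  let ?t = "4*n - 2*i - 40*q"
  have "(\<Sum>k\<in>{19*q..21*q}. P ?t (i,False) (k,True)) \<ge> (1-p)^(2*n) * (1 - (real ?t - 2) / (4 * real q^2))"
  proof (rule cross_mass)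
    have e1: "real (2 * n - i - 21 * q - 1) = 2 * real n - real i - 21 * real q - 1" using assms qf by linarith
    have e2: "real (2 * n - i - 19 * q - 1) = 2 * real n - real i - 19 * real q - 1" using assms qf by linarith
    have e3: "real (4 * n - 2 * i - 40 * q) = 4 * real n - 2 * real i - 40 * real q" using assms qf by linarith
    show "real (2 * n - i - 21 * q - 1) \<le> (real (4 * n - 2 * i - 40 * q) - 2) / 2 - real q"
      unfolding e1 e3 by (simp add: field_simps)
    show "(real (4 * n - 2 * i - 40 * q) - 2) / 2 + real q \<le> real (2 * n - i - 19 * q - 1)"
      unfolding e2 e3 by (simp add: field_simps)
  qed (use assms qf in linarith)+
  moreover have "(1-p)^(2*n) * (1 - (real ?t - 2) / (4 * real q^2)) \<ge> \<beta>"
    by (rule cross_bound) (use assms qf in linarith)+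
  ultimately show ?thesis by linarith
qed

lemma St5: assumes "19*q \<le> i" "i \<le> 21*q" "4*q \<le> j" "j \<le> 6*q"
  shows "P (40*q) (i,True) (j,False) \<ge> \<beta> / real n"
proof -
  have "P (40*q) (i,True) (j,False) \<ge> p * (1-p)^(40*q) * (1/2 - real (40*q) / (4 * real q^2))"
    by (rule Ldu_win) (use assms qf in linarith)+
  moreover have "p * (1-p)^(40*q) * (1/2 - real (40*q) / (4 * real q ^ 2)) \<ge> \<beta> / real n"
    by (rule stage_bound) (use assms qf in linarith)+
  ultimately show ?thesis by linarith
qed

lemma St6: assumes "12*q \<le> i" "i \<le> n - 1" "4*q \<le> j" "j \<le> 6*q"
  shows "P (2*i) (i,True) (j,False) \<ge> \<beta> / real n"
proof -
  have "P (2*i) (i,True) (j,False) \<ge> p * (1-p)^(2*i) * (1/2 - real (2*i) / (4 * real q^2))"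
    by (rule Ldu_win) (use assms qf in linarith)+
  moreover have "p * (1-p)^(2*i) * (1/2 - real (2*i) / (4 * real q ^ 2)) \<ge> \<beta> / real n"
    by (rule stage_bound) (use assms qf in linarith)+
  ultimately show ?thesis by linarith
qed

lemma St7: assumes "2 \<le> i" "i < 12*q"
  shows "(\<Sum>k\<in>{19*q..21*q}. P (2*i + 40*q - 4) (i,True) (k,False)) \<ge> \<beta>"
proof -
  let ?t = "2*i + 40*q - 4"
  have "(\<Sum>k\<in>{19*q..21*q}. P ?t (i,True) (k,False)) \<ge> (1-p)^(2*n) * (1 - (real ?t - 2) / (4 * real q^2))"
  proof (rule cross_mass_bot)
    have e1: "real (i + 19 * q - 3) = real i + 19 * real q - 3" using assms qf by linarith
    have e2: "real (i + 21 * q - 3) = real i + 21 * real q - 3" using assms qf by linarith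
    have e3: "real (2 * i + 40 * q - 4) = 2 * real i + 40 * real q - 4" using assms qf by linarith
    show "real (i + 19 * q - 3) \<le> (real (2 * i + 40 * q - 4) - 2) / 2 - real q"
      unfolding e1 e3 by (simp add: field_simps)
    show "(real (2 * i + 40 * q - 4) - 2) / 2 + real q \<le> real (i + 21 * q - 3)"
      unfolding e2 e3 by (simp add: field_simps)
  qed (use assms qf in linarith)+
  moreover have "(1-p)^(2*n) * (1 - (real ?t - 2) / (4 * real q^2)) \<ge> \<beta>"
    by (rule cross_bound) (use assms qf in linarith)+
  ultimately show ?thesis by linarith
qed

lemma St8: assumes "19*q \<le> i" "i \<le> 21*q" "8*q \<le> j" "j \<le> 10*q"
  shows "P (40*q) (i,False) (j,True) \<ge> \<beta> / real n"
proof -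
  have "P (40*q) (i,False) (j,True) \<ge> p * (1-p)^(40*q) * (1/2 - real (40*q) / (4 * real q^2))"
    by (rule Lud_win) (use assms qf in linarith)+
  moreover have "p * (1-p)^(40*q) * (1/2 - real (40*q) / (4 * real q ^ 2)) \<ge> \<beta> / real n"
    by (rule stage_bound) (use assms qf in linarith)+
  ultimately show ?thesis by linarith
qed

end


context ch begin

lemma P_ge_sumT:
  assumes "1 \<le> j1" "j2 \<le> n" "y \<in> S"
  shows "P (a+b) x y \<ge> (\<Sum>j\<in>{j1..j2}. P a x (j,True) * P b (j,True) y)"
proof -
  have W: "(\<lambda>j. (j,True)) ` {j1..j2} \<subseteq> S" using assms by (auto simp: mem_states)
  have "(\<Sum>j\<in>{j1..j2}. P a x (j,True) * P b (j,True) y) = (\<Sum>w\<in>(\<lambda>j. (j,True)) ` {j1..j2}. P a x w * P b w y)"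
    by (subst sum.reindex) (auto simp: inj_on_def)
  also have "\<dots> \<le> P (a+b) x y" by (rule P_ge_sum[OF W assms(3)])
  finally show ?thesis .
qed

lemma P_ge_sumF:
  assumes "1 \<le> j1" "j2 \<le> n" "y \<in> S"
  shows "P (a+b) x y \<ge> (\<Sum>j\<in>{j1..j2}. P a x (j,False) * P b (j,False) y)"
proof -
  have W: "(\<lambda>j. (j,False)) ` {j1..j2} \<subseteq> S" using assms by (auto simp: mem_states)
  have "(\<Sum>j\<in>{j1..j2}. P a x (j,False) * P b (j,False) y) = (\<Sum>w\<in>(\<lambda>j. (j,False)) ` {j1..j2}. P a x w * P b w y)"
    by (subst sum.reindex) (auto simp: inj_on_def)
  also have "\<dots> \<le> P (a+b) x y" by (rule P_ge_sum[OF W assms(3)])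
  finally show ?thesis .
qed

lemma comp_spread:
  fixes f g :: "nat \<Rightarrow> real"
  assumes "\<And>j. j \<in> {j1..j2} \<Longrightarrow> f j \<ge> s1" "\<And>j. j \<in> {j1..j2} \<Longrightarrow> g j \<ge> s2" "s1 \<ge> 0" "s2 \<ge> 0"
  shows "(\<Sum>j\<in>{j1..j2}. f j * g j) \<ge> real (j2 + 1 - j1) * (s1 * s2)"
proof -
  have "(\<Sum>j\<in>{j1..j2}. s1 * s2) \<le> (\<Sum>j\<in>{j1..j2}. f j * g j)"
    using assms by (intro sum_mono mult_mono) (auto intro: order.trans[OF assms(3)])
  then show ?thesis by simp
qed

lemma comp_conc:
  fixes f g :: "'b \<Rightarrow> real"
  assumes "(\<Sum>j\<in>A. f j) \<ge> m" "\<And>j. j \<in> A \<Longrightarrow> g j \<ge> s" "s \<ge> 0" "\<And>j. f j \<ge> 0"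
  shows "(\<Sum>j\<in>A. f j * g j) \<ge> m * s"
proof -
  have "m * s \<le> (\<Sum>j\<in>A. f j) * s" using assms(1,3) by (rule mult_right_mono)
  also have "\<dots> = (\<Sum>j\<in>A. f j * s)" by (simp add: sum_distrib_right)
  also have "\<dots> \<le> (\<Sum>j\<in>A. f j * g j)" using assms by (intro sum_mono mult_left_mono) auto
  finally show ?thesis .
qed

end

context chL begin

definition "sp = \<beta> / real n"

lemma sp_nn: "sp \<ge> 0" using beta_pos by (simp add: sp_def)

lemma loop:
  assumes "4*q \<le> i" "i \<le> 6*q" "4*q \<le> i'" "i' \<le> 6*q" "29*q+4 \<le> L" "L \<le> 141*q - 4"
  shows "P L (i,False) (i',False) \<ge> real (2*q+1) * (sp * sp)"
proof -
  have L: "L = (L - 15*q) + 15*q" using assms by simp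
  have "P ((L - 15*q) + 15*q) (i,False) (i',False) \<ge> (\<Sum>j\<in>{8*q..10*q}. P (L - 15*q) (i,False) (j,True) * P (15*q) (j,True) (i',False))"
    using assms qf by (intro P_ge_sumT) (auto simp: mem_states)
  moreover have "(\<Sum>j\<in>{8*q..10*q}. P (L - 15*q) (i,False) (j,True) * P (15*q) (j,True) (i',False)) \<ge> real (10*q + 1 - 8*q) * (sp * sp)"
    by (rule comp_spread[OF _ _ sp_nn sp_nn]) (use assms qf in \<open>auto simp: sp_def intro!: St1 St2\<close>)
  moreover have "10*q + 1 - 8*q = 2*q+1" by simp
  ultimately show ?thesis using L by simp
qed

lemma R1: assumes "2 \<le> i" "i \<le> 32*q" "4*q \<le> j" "j \<le> 6*q"
  shows "P (60*q + 18*q) (i,False) (j,False) \<ge> real (2*q+1) * (sp * sp)"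
proof -
  have "P (60*q + 18*q) (i,False) (j,False) \<ge> (\<Sum>k\<in>{8*q..10*q}. P (60*q) (i,False) (k,True) * P (18*q) (k,True) (j,False))"
    using assms qf by (intro P_ge_sumT) (auto simp: mem_states)
  moreover have "(\<Sum>k\<in>{8*q..10*q}. P (60*q) (i,False) (k,True) * P (18*q) (k,True) (j,False)) \<ge> real (10*q + 1 - 8*q) * (sp * sp)"
    by (rule comp_spread[OF _ _ sp_nn sp_nn]) (use assms qf in \<open>auto simp: sp_def intro!: St3 St2\<close>)
  moreover have "10*q + 1 - 8*q = 2*q+1" by simp
  ultimately show ?thesis by simp
qed

lemma R2: assumes "32*q < i" "i \<le> n - 1" "4*q \<le> j" "j \<le> 6*q"
  shows "P ((4*n - 2*i - 40*q) + 40*q) (i,False) (j,False) \<ge> \<beta> * sp"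
proof -
  have "P ((4*n - 2*i - 40*q) + 40*q) (i,False) (j,False) \<ge> (\<Sum>k\<in>{19*q..21*q}. P (4*n - 2*i - 40*q) (i,False) (k,True) * P (40*q) (k,True) (j,False))"
    using assms qf by (intro P_ge_sumT) (auto simp: mem_states)
  moreover have "(\<Sum>k\<in>{19*q..21*q}. P (4*n - 2*i - 40*q) (i,False) (k,True) * P (40*q) (k,True) (j,False)) \<ge> \<beta> * sp"
    by (rule comp_conc[OF St4 _ sp_nn P_nn]) (use assms qf in \<open>auto simp: sp_def intro!: St5\<close>)
  ultimately show ?thesis by simp
qed

lemma R3: assumes "12*q \<le> i" "i \<le> n - 1" "4*q \<le> j" "j \<le> 6*q"
  shows "P (2*i) (i,True) (j,False) \<ge> sp"
  using St6[OF assms] by (simp add: sp_def)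

lemma R4: assumes "2 \<le> i" "i < 12*q" "4*q \<le> j" "j \<le> 6*q"
  shows "P ((2*i + 40*q - 4) + (40*q + 18*q)) (i,True) (j,False) \<ge> \<beta> * (real (2*q+1) * (sp * sp))"
proof -
  have inner: "P (40*q + 18*q) (k,False) (j,False) \<ge> real (2*q+1) * (sp * sp)" if "19*q \<le> k" "k \<le> 21*q" for k
  proof -
    have "P (40*q + 18*q) (k,False) (j,False) \<ge> (\<Sum>m\<in>{8*q..10*q}. P (40*q) (k,False) (m,True) * P (18*q) (m,True) (j,False))"
      using assms qf by (intro P_ge_sumT) (auto simp: mem_states)
    moreover have "(\<Sum>m\<in>{8*q..10*q}. P (40*q) (k,False) (m,True) * P (18*q) (m,True) (j,False)) \<ge> real (10*q + 1 - 8*q) * (sp * sp)"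
      by (rule comp_spread[OF _ _ sp_nn sp_nn]) (use assms that qf in \<open>auto simp: sp_def intro!: St8 St2\<close>)
    moreover have "10*q + 1 - 8*q = 2*q+1" by simp
    ultimately show ?thesis by simp
  qed
  have "P ((2*i + 40*q - 4) + (40*q + 18*q)) (i,True) (j,False) \<ge> (\<Sum>k\<in>{19*q..21*q}. P (2*i + 40*q - 4) (i,True) (k,False) * P (40*q + 18*q) (k,False) (j,False))"
    using assms qf by (intro P_ge_sumF) (auto simp: mem_states)
  moreover have "(\<Sum>k\<in>{19*q..21*q}. P (2*i + 40*q - 4) (i,True) (k,False) * P (40*q + 18*q) (k,False) (j,False)) \<ge> \<beta> * (real (2*q+1) * (sp * sp))"
    by (rule comp_conc[OF St7[OF assms(1,2)] _ _ P_nn]) (use inner sp_nn in auto)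
  ultimately show ?thesis by simp
qed

end


context chL begin

definition "rho = \<beta>^3 / 90"

lemma q2n: "real (2*q+1) \<ge> real n / 40" using qf by simp

lemma sp2_ge: "real (2*q+1) * (sp * sp) \<ge> \<beta>^2 / (40 * real n)"
proof -
  have np: "real n > 0" using n3 by simp
  have "\<beta>^2 / (40 * real n) = (real n / 40) * (sp * sp)" unfolding sp_def using np by (simp add: field_simps power2_eq_square)
  also have "\<dots> \<le> real (2*q+1) * (sp * sp)" using q2n by (intro mult_right_mono) auto
  finally show ?thesis .
qed

lemma bnd_facts: "\<beta>^3 \<le> \<beta>^2" "\<beta>^2 \<le> \<beta>" "0 < \<beta>"
  using beta_pos beta_le by (auto simp: power2_eq_square power3_eq_cube mult_le_cancel_right1 mult_le_cancel_left1 mult_left_le_one_le)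

lemma rho_facts: "rho \<le> \<beta>^2/90" "rho \<le> \<beta>^3/40" "\<beta>^2 \<ge> 0" "rho \<ge> 0"
proof -
  have "\<beta>^2 \<ge> 0" "\<beta>^3 \<ge> 0" using beta_pos by auto
  then show "rho \<le> \<beta>^2/90" "rho \<le> \<beta>^3/40" "\<beta>^2 \<ge> 0" "rho \<ge> 0" unfolding rho_def using bnd_facts by linarith+
qed

lemma divn: "a \<le> b \<Longrightarrow> a / real n \<le> b / real n" by (simp add: divide_right_mono)

lemma om: "1 - p \<ge> 2/3" using p_le by simp

lemma P1_ge: assumes "x \<in> S" "w \<in> S" "y \<in> S" shows "P (1 + a) x y \<ge> K x w * P a w y"
  using P_ge_one[OF assms(2,3), where a=1 and b=a and x=x] P_1[OF assms(1)] by simp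

lemma route:
  assumes x: "x \<in> S"
  shows "\<exists>r. 12*q+4 \<le> r \<and> r \<le> 124*q - 4 \<and> (\<forall>j. 4*q \<le> j \<longrightarrow> j \<le> 6*q \<longrightarrow> P r x (j,False) \<ge> rho / real n)"
proof -
  have np: "real n > 0" using n3 by simp
  have sp2: "real (2*q+1) * (sp * sp) \<ge> rho / real n"
  proof -
    have "rho / real n \<le> (\<beta>^2 / 40) / real n" by (rule divn) (use rho_facts in linarith)
    then have "rho / real n \<le> \<beta>^2 / (40 * real n)" by simp
    then show ?thesis using sp2_ge by linarith
  qed
  have sp1: "sp \<ge> rho / real n" unfolding sp_def by (rule divn) (use rho_facts bnd_facts in linarith)
  have bsp: "\<beta> * sp \<ge> rho / real n"
  proof -
    have "rho / real n \<le> \<beta>^2 / real n" by (rule divn) (use rho_facts in linarith)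
    then show ?thesis unfolding sp_def by (simp add: power2_eq_square)
  qed
  have bsp2: "\<beta> * (real (2*q+1) * (sp * sp)) \<ge> rho / real n"
  proof -
    have "rho / real n \<le> (\<beta>^3 / 40) / real n" by (rule divn) (use rho_facts in linarith)
    then have "rho / real n \<le> \<beta> * (\<beta>^2 / (40 * real n))" by (simp add: power2_eq_square power3_eq_cube)
    also have "\<dots> \<le> \<beta> * (real (2*q+1) * (sp * sp))" using sp2_ge bnd_facts by (intro mult_left_mono) auto
    finally show ?thesis .
  qed
  have psp2: "(1-p) * (real (2*q+1) * (sp * sp)) \<ge> rho / real n"
  proof -
    have "rho / real n \<le> (\<beta>^2 / 60) / real n" by (rule divn) (use rho_facts in linarith)
    then have "rho / real n \<le> (2/3) * (\<beta>^2 / (40 * real n))" by simp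
    also have "\<dots> \<le> (1-p) * (real (2*q+1) * (sp * sp))" using sp2_ge om bnd_facts np by (intro mult_mono) auto
    finally show ?thesis .
  qed
  have ppsp2: "(1-p) * ((1-p) * (real (2*q+1) * (sp * sp))) \<ge> rho / real n"
  proof -
    have "rho / real n \<le> (\<beta>^2 / 90) / real n" by (rule divn) (use rho_facts in linarith)
    then have "rho / real n \<le> (2/3) * ((2/3) * (\<beta>^2 / (40 * real n)))" by simp
    also have "\<dots> \<le> (1-p) * ((1-p) * (real (2*q+1) * (sp * sp)))"
      using sp2_ge om bnd_facts np by (intro mult_mono) (auto intro: mult_nonneg_nonneg sp_nn)
    finally show ?thesis .
  qed
  have psp: "(1-p) * sp \<ge> rho / real n"
  proof -
    have "rho / real n \<le> ((2/3) * \<beta>) / real n" by (rule divn) (use rho_facts bnd_facts in linarith)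
    then have "rho / real n \<le> (2/3) * sp" unfolding sp_def by simp
    also have "\<dots> \<le> (1-p) * sp" using om sp_nn by (intro mult_right_mono) auto
    finally show ?thesis .
  qed
  have ppsp: "(1-p) * ((1-p) * sp) \<ge> rho / real n"
  proof -
    have "rho / real n \<le> ((4/9) * \<beta>) / real n" by (rule divn) (use rho_facts bnd_facts in linarith)
    then have "rho / real n \<le> (2/3) * ((2/3) * sp)" unfolding sp_def by simp
    also have "\<dots> \<le> (1-p) * ((1-p) * sp)" using om sp_nn by (intro mult_mono) auto
    finally show ?thesis .
  qed
  have S2: "(2,False) \<in> S" "(1,False) \<in> S" "(n-1,True) \<in> S" "(n,True) \<in> S" using n3 by (auto simp: mem_states)
  have jS: "(j,False) \<in> S" if "4*q \<le> j" "j \<le> 6*q" for j using that qf by (auto simp: mem_states)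
  from x n3 show ?thesis
  proof (cases rule: state_cases)
    case (um i)
    show ?thesis
    proof (cases "i \<le> 32*q")
      case True
      show ?thesis
        by (rule exI[of _ "60*q + 18*q"]) (use qf R1[OF um(2) True] sp2 um in \<open>auto intro: order.trans\<close>)
    next
      case False
      have e: "(4*n - 2*i - 40*q) + 40*q = 4*n - 2*i" using um qf by linarith
      show ?thesis
        by (rule exI[of _ "4*n - 2*i"]) (use qf R2[of i] bsp um False e in \<open>auto intro: order.trans\<close>)
    qed
  next
    case (dm i)
    show ?thesis
    proof (cases "12*q \<le> i")
      case True
      show ?thesis
        by (rule exI[of _ "2*i"]) (use qf R3[of i] sp1 dm True in \<open>auto intro: order.trans\<close>)
    next
      case False
      show ?thesis
        by (rule exI[of _ "(2*i + 40*q - 4) + (40*q + 18*q)"]) (use qf R4[of i] bsp2 dm False in \<open>auto intro: order.trans\<close>)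
    qed
  next
    case u1
    have b: "P (1 + (60*q + 18*q)) (1,False) (j,False) \<ge> rho / real n" if "4*q \<le> j" "j \<le> 6*q" for j
    proof -
      have "P (1 + (60*q + 18*q)) (1,False) (j,False) \<ge> K (1,False) (2,False) * P (60*q + 18*q) (2,False) (j,False)"
        by (rule P1_ge) (use S2 jS that in auto)
      moreover have "K (1,False) (2,False) * P (60*q + 18*q) (2,False) (j,False) \<ge> (1-p) * (real (2*q+1) * (sp * sp))"
      proof -
        have r: "P (60*q + 18*q) (2,False) (j,False) \<ge> real (2*q+1) * (sp * sp)" by (rule R1) (use that qf in linarith)+
        show ?thesis unfolding Ku12 by (rule mult_left_mono[OF r]) (use p01 in auto)
      qed
      ultimately show ?thesis using psp2 by linarith
    qed
    show ?thesis by (rule exI[of _ "1 + (60*q + 18*q)"]) (use qf b u1 in auto)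
  next
    case d1
    have b: "P (1 + (1 + (60*q + 18*q))) (1,True) (j,False) \<ge> rho / real n" if "4*q \<le> j" "j \<le> 6*q" for j
    proof -
      have "P (1 + (1 + (60*q + 18*q))) (1,True) (j,False) \<ge> K (1,True) (1,False) * P (1 + (60*q + 18*q)) (1,False) (j,False)"
        by (rule P1_ge) (use S2 jS that n3 in \<open>auto simp: mem_states\<close>)
      moreover have "P (1 + (60*q + 18*q)) (1,False) (j,False) \<ge> K (1,False) (2,False) * P (60*q + 18*q) (2,False) (j,False)"
        by (rule P1_ge) (use S2 jS that in auto)
      moreover have "K (1,False) (2,False) * P (60*q + 18*q) (2,False) (j,False) \<ge> (1-p) * (real (2*q+1) * (sp * sp))"
      proof -
        have r: "P (60*q + 18*q) (2,False) (j,False) \<ge> real (2*q+1) * (sp * sp)" by (rule R1) (use that qf in linarith)+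
        show ?thesis unfolding Ku12 by (rule mult_left_mono[OF r]) (use p01 in auto)
      qed
      ultimately have "P (1 + (1 + (60*q + 18*q))) (1,True) (j,False) \<ge> (1-p) * ((1-p) * (real (2*q+1) * (sp * sp)))"
        unfolding Kd11 using p01 by (meson mult_left_mono order.trans)
      then show ?thesis using ppsp2 by linarith
    qed
    show ?thesis by (rule exI[of _ "1 + (1 + (60*q + 18*q))"]) (use qf b d1 in auto)
  next
    case un
    have b: "P (1 + (1 + 2*(n-1))) (n,False) (j,False) \<ge> rho / real n" if "4*q \<le> j" "j \<le> 6*q" for j
    proof -
      have "P (1 + (1 + 2*(n-1))) (n,False) (j,False) \<ge> K (n,False) (n,True) * P (1 + 2*(n-1)) (n,True) (j,False)"
        by (rule P1_ge) (use S2 jS that n3 in \<open>auto simp: mem_states\<close>)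
      moreover have "P (1 + 2*(n-1)) (n,True) (j,False) \<ge> K (n,True) (n-1,True) * P (2*(n-1)) (n-1,True) (j,False)"
        by (rule P1_ge) (use S2 jS that in auto)
      moreover have "K (n,True) (n-1,True) * P (2*(n-1)) (n-1,True) (j,False) \<ge> (1-p) * sp"
      proof -
        have r: "P (2*(n-1)) (n-1,True) (j,False) \<ge> sp" by (rule R3) (use that qf in linarith)+
        show ?thesis unfolding Kdnn by (rule mult_left_mono[OF r]) (use p01 in auto)
      qed
      ultimately have "P (1 + (1 + 2*(n-1))) (n,False) (j,False) \<ge> (1-p) * ((1-p) * sp)"
        unfolding Kunn using p01 by (meson mult_left_mono order.trans)
      then show ?thesis using ppsp by linarith
    qed
    show ?thesis by (rule exI[of _ "1 + (1 + 2*(n-1))"]) (use qf b un in auto)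
  next
    case dn
    have b: "P (1 + 2*(n-1)) (n,True) (j,False) \<ge> rho / real n" if "4*q \<le> j" "j \<le> 6*q" for j
    proof -
      have "P (1 + 2*(n-1)) (n,True) (j,False) \<ge> K (n,True) (n-1,True) * P (2*(n-1)) (n-1,True) (j,False)"
        by (rule P1_ge) (use S2 jS that in auto)
      moreover have "K (n,True) (n-1,True) * P (2*(n-1)) (n-1,True) (j,False) \<ge> (1-p) * sp"
      proof -
        have r: "P (2*(n-1)) (n-1,True) (j,False) \<ge> sp" by (rule R3) (use that qf in linarith)+
        show ?thesis unfolding Kdnn by (rule mult_left_mono[OF r]) (use p01 in auto)
      qed
      ultimately show ?thesis using psp by linarith
    qed
    show ?thesis by (rule exI[of _ "1 + 2*(n-1)"]) (use qf b dn in auto)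
  qed
qed

end


context chL begin

definition "nuL y = (if snd y = False \<and> 4*q \<le> fst y \<and> fst y \<le> 6*q then 1 / real (2*q+1) else 0)"
definition "deltaL = rho * \<beta>^2 / 64000"

lemma nuL_sum: "(\<Sum>y\<in>S. nuL y) = 1"
proof -
  let ?A = "(\<lambda>j. (j,False)) ` {4*q..6*q}"
  have A: "?A \<subseteq> S" using qf by (auto simp: mem_states)
  have "(\<Sum>y\<in>S. nuL y) = (\<Sum>y\<in>?A. nuL y)"
    by (rule sum_restrict[OF A]) (auto simp: nuL_def)
  also have "\<dots> = (\<Sum>j\<in>{4*q..6*q}. 1 / real (2*q+1))"
    by (subst sum.reindex) (auto simp: inj_on_def nuL_def)
  also have "\<dots> = 1" by simp
  finally show ?thesis .
qed

lemma final_arith: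
  assumes a: "a \<ge> real n / 40"
  shows "a * (rho / real n * (a * (sp * sp))) \<ge> deltaL * (1 / a)"
proof -
  define Y where "Y = rho * \<beta>^2"
  have np: "real n > 0" using n3 by simp
  have apos: "a > 0" using a np by linarith
  have Y0: "Y \<ge> 0" unfolding Y_def using rho_facts by simp
  have l1: "a * (rho / real n * (a * (sp * sp))) = (a*a) * (Y / (real n * real n * real n))"
    unfolding sp_def Y_def using np by (simp add: field_simps power2_eq_square)
  have aa: "a*a \<ge> (real n / 40) * (real n / 40)" using a np by (intro mult_mono) auto
  have "Y / (1600 * real n) = (real n / 40) * (real n / 40) * (Y / (real n * real n * real n))"
    using np by (simp add: field_simps)
  also have "\<dots> \<le> (a*a) * (Y / (real n * real n * real n))"
    using aa Y0 np by (intro mult_right_mono) auto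
  finally have L: "Y / (1600 * real n) \<le> a * (rho / real n * (a * (sp * sp)))" using l1 by simp
  have "deltaL * (1 / a) = (Y / 64000) / a" unfolding deltaL_def Y_def by simp
  also have "\<dots> \<le> (Y / 64000) / (real n / 40)" using a apos np Y0 by (intro divide_left_mono) auto
  also have "\<dots> = Y / (1600 * real n)" using np by (simp add: field_simps)
  finally show ?thesis using L by linarith
qed

lemma doeblin_large: "doeblin (153*q) deltaL nuL"
proof -
  have np: "real n > 0" using n3 by simp
  have a0: "real (2*q+1) > 0" by simp
  have bound: "P (153*q) x (j,False) \<ge> deltaL / real (2*q+1)" if x: "x \<in> S" and j: "4*q \<le> j" "j \<le> 6*q" for x j
  proof -
    obtain r where r: "12*q+4 \<le> r" "r \<le> 124*q - 4" and rb: "\<And>j. 4*q \<le> j \<Longrightarrow> j \<le> 6*q \<Longrightarrow> P r x (j,False) \<ge> rho / real n"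
      using route[OF x] by blast
    have Te: "153*q = r + (153*q - r)" using r by simp
    have "P (r + (153*q - r)) x (j,False) \<ge> (\<Sum>h\<in>{4*q..6*q}. P r x (h,False) * P (153*q - r) (h,False) (j,False))"
      using j qf by (intro P_ge_sumF) (auto simp: mem_states)
    moreover have "(\<Sum>h\<in>{4*q..6*q}. P r x (h,False) * P (153*q - r) (h,False) (j,False)) \<ge> real (6*q + 1 - 4*q) * (rho / real n * (real (2*q+1) * (sp * sp)))"
    proof (rule comp_spread)
      show "\<And>h. h \<in> {4*q..6*q} \<Longrightarrow> P r x (h,False) \<ge> rho / real n" using rb by auto
      show "\<And>h. h \<in> {4*q..6*q} \<Longrightarrow> P (153*q - r) (h,False) (j,False) \<ge> real (2*q+1) * (sp * sp)"
        using j r by (intro loop) auto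
      show "rho / real n \<ge> 0" using rho_facts np by simp
      show "real (2*q+1) * (sp * sp) \<ge> 0" using sp_nn by simp
    qed
    moreover have "6*q + 1 - 4*q = 2*q+1" by simp
    ultimately have "P (153*q) x (j,False) \<ge> real (2*q+1) * (rho / real n * (real (2*q+1) * (sp * sp)))"
      using Te by simp
    moreover have "real (2*q+1) * (rho / real n * (real (2*q+1) * (sp * sp))) \<ge> deltaL * (1 / real (2*q+1))"
      by (rule final_arith[OF q2n])
    ultimately show ?thesis by simp
  qed
  show ?thesis
    unfolding doeblin_def
  proof (intro conjI ballI)
    show "deltaL > 0" unfolding deltaL_def rho_def using beta_pos by simp
    show "\<And>y. y \<in> S \<Longrightarrow> nuL y \<ge> 0" by (simp add: nuL_def)
    show "(\<Sum>y\<in>S. nuL y) = 1" by (rule nuL_sum)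
    fix x y assume x: "x \<in> S" and y: "y \<in> S"
    show "deltaL * nuL y \<le> P (153*q) x y"
    proof (cases "snd y = False \<and> 4*q \<le> fst y \<and> fst y \<le> 6*q")
      case True
      then have "y = (fst y, False)" by (cases y) auto
      then show ?thesis using bound[OF x, of "fst y"] True by (simp add: nuL_def)
    next
      case False
      have "nuL y = 0" unfolding nuL_def by (rule if_not_P[OF False])
      then show ?thesis using P_nn by simp
    qed
  qed
qed

end


context ch begin

lemma half_ge: "(x::real) \<le> 1/3 \<Longrightarrow> (1 - x) / 2 \<ge> 1/3" by (simp add: field_simps)

lemma chain2:
  assumes "P a x w \<ge> (1/3)^a" "P b w z \<ge> (1/3)^b" "w \<in> S" "z \<in> S"
  shows "P (a + b) x z \<ge> (1/3::real)^(a+b)"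
proof -
  have "(1/3::real)^(a+b) = (1/3)^a * (1/3)^b" by (simp add: power_add)
  also have "\<dots> \<le> P a x w * P b w z" using assms by (intro mult_mono) (auto intro: P_nn)
  also have "\<dots> \<le> P (a + b) x z" by (rule P_ge_one[OF assms(3,4)])
  finally show ?thesis .
qed

lemma one_step: assumes "x \<in> S" "K x y \<ge> 1/3" shows "P 1 x y \<ge> (1/3)^1"
  using assms P_1 by simp

lemma fw_up: "1 \<le> i \<Longrightarrow> i + m \<le> n \<Longrightarrow> P m (i,False) (i+m,False) \<ge> (1/3)^m"
proof (induction m)
  case 0 then show ?case by (simp add: P_0)
next
  case (Suc m)
  have K: "K (i+m,False) (i+m+1,False) \<ge> 1/3"
  proof (cases "i + m = 1")
    case True
    then have e: "i + m + 1 = 2" by simp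
    have "K (i+m,False) (i+m+1,False) = 1 - p" unfolding e unfolding True by (rule Ku12)
    then show ?thesis using p_le by linarith
  next
    case False
    have "K (i+m,False) (i+m+1,False) = (1-p)/2" by (rule Kuu1) (use Suc False in auto)
    then show ?thesis using half_ge[OF p_le] by linarith
  qed
  have "P (m + 1) (i,False) (i+m+1,False) \<ge> (1/3)^(m+1)"
    by (rule chain2[OF Suc.IH one_step]) (use Suc K in \<open>auto simp: mem_states\<close>)
  then show ?case by simp
qed

lemma fw_dn: "1 \<le> j \<Longrightarrow> j + m \<le> n \<Longrightarrow> P m (j+m,True) (j,True) \<ge> (1/3)^m"
proof (induction m arbitrary: j)
  case 0 then show ?case by (simp add: P_0)
next
  case (Suc m)
  have K: "K (j+m+1,True) (j+m,True) \<ge> 1/3"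
  proof (cases "j + m + 1 = n")
    case True
    then have e: "j + m = n - 1" by simp
    have "K (j+m+1,True) (j+m,True) = 1 - p" unfolding True unfolding e by (rule Kdnn)
    then show ?thesis using p_le by linarith
  next
    case False
    have e: "j + m + 1 - 1 = j + m" by simp
    have "K (j+m+1,True) (j+m+1-1,True) = (1-p)/2" by (rule Kdd1) (use Suc False in auto)
    then show ?thesis unfolding e using half_ge[OF p_le] by linarith
  qed
  have "P (1 + m) (j+m+1,True) (j,True) \<ge> (1/3)^(1+m)"
    by (rule chain2[OF one_step Suc.IH]) (use Suc K in \<open>auto simp: mem_states\<close>)
  then show ?case by (simp add: add.commute)
qed

lemma stay2: "P m (2,False) (2,False) \<ge> (1/3)^m"
proof (induction m)
  case 0 then show ?case by (simp add: P_0)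
next
  case (Suc m)
  have "K (2,False) (2,False) = 1/2" by (rule Kuu) (use n3 in auto)
  then have K: "K (2,False) (2,False) \<ge> 1/3" by simp
  have "P (m + 1) (2,False) (2,False) \<ge> (1/3)^(m+1)"
    by (rule chain2[OF Suc.IH one_step]) (use K n3 in \<open>auto simp: mem_states\<close>)
  then show ?case by simp
qed

lemma reach2: assumes x: "x \<in> S" shows "P (2*n+2) x (2,False) \<ge> (1/3)^(2*n+2)"
proof -
  obtain i b where xi: "x = (i,b)" by (cases x)
  have i: "1 \<le> i" "i \<le> n" using x xi by (auto simp: mem_states)
  have S1: "(1,True) \<in> S" "(1,False) \<in> S" "(2,False) \<in> S" "(n,False) \<in> S" "(n,True) \<in> S" using n3 by (auto simp: mem_states)
  have k1: "K (1,True) (1,False) \<ge> 1/3" using Kd11 p_le by linarith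
  have k2: "K (1,False) (2,False) \<ge> 1/3" using Ku12 p_le by linarith
  have k3: "K (n,False) (n,True) \<ge> 1/3" using Kunn p_le by linarith
  have to2: "P (1 + 1) (1,True) (2,False) \<ge> (1/3)^(1+1)"
    by (rule chain2[where w="(1,False)", OF one_step[OF _ k1] one_step[OF _ k2]]) (use S1 in auto)
  show ?thesis
  proof (cases b)
    case False
    have a1: "P (n - i) (i,False) (n,False) \<ge> (1/3)^(n-i)" using fw_up[of i "n-i"] i by simp
    have a2: "P (n - i + 1) (i,False) (n,True) \<ge> (1/3)^(n-i+1)"
      by (rule chain2[OF a1 one_step[OF _ k3]]) (use S1 in auto)
    have a3: "P (n - 1) (n,True) (1,True) \<ge> (1/3)^(n-1)" using fw_dn[of 1 "n-1"] n3 by simp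
    have a4: "P (n - i + 1 + (n - 1)) (i,False) (1,True) \<ge> (1/3)^(n - i + 1 + (n - 1))"
      by (rule chain2[OF a2 a3]) (use S1 in auto)
    have a5: "P (n - i + 1 + (n - 1) + (1 + 1)) (i,False) (2,False) \<ge> (1/3)^(n - i + 1 + (n - 1) + (1 + 1))"
      by (rule chain2[OF a4 to2]) (use S1 in auto)
    have a6: "P (n - i + 1 + (n - 1) + (1 + 1) + i) (i,False) (2,False) \<ge> (1/3)^(n - i + 1 + (n - 1) + (1 + 1) + i)"
      by (rule chain2[OF a5 stay2]) (use S1 in auto)
    have e: "n - i + 1 + (n - 1) + (1 + 1) + i = 2*n+2" using i n3 by simp
    show ?thesis using a6 xi False unfolding e by simp
  next
    case True
    have a1: "P (i - 1) (i,True) (1,True) \<ge> (1/3)^(i-1)" using fw_dn[of 1 "i-1"] i by simp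
    have a2: "P (i - 1 + (1 + 1)) (i,True) (2,False) \<ge> (1/3)^(i - 1 + (1 + 1))"
      by (rule chain2[OF a1 to2]) (use S1 in auto)
    have a3: "P (i - 1 + (1 + 1) + (2*n+1-i)) (i,True) (2,False) \<ge> (1/3)^(i - 1 + (1 + 1) + (2*n+1-i))"
      by (rule chain2[OF a2 stay2]) (use S1 in auto)
    have e: "i - 1 + (1 + 1) + (2*n+1-i) = 2*n+2" using i by simp
    show ?thesis using a3 xi True unfolding e by simp
  qed
qed

lemma doeblin_small: "doeblin (2*n+2) ((1/3)^(2*n+2)) (\<lambda>y. if y = (2,False) then 1 else 0)"
  unfolding doeblin_def
proof (intro conjI ballI)
  show "(0::real) < (1/3)^(2*n+2)" by simp
  show "\<And>y. 0 \<le> (if y = (2,False) then 1 else (0::real))" by simp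
  have "(2,False) \<in> S" using n3 by (simp add: mem_states)
  then show "(\<Sum>y\<in>S. if y = (2,False) then 1 else (0::real)) = 1" by simp
  fix x y assume "x \<in> S" "y \<in> S"
  then show "(1/3)^(2*n+2) * (if y = (2,False) then 1 else 0) \<le> P (2*n+2) x y"
    using reach2 P_nn by auto
qed

end


definition d0 :: "real \<Rightarrow> real" where
  "d0 c = min ((exp (-8*c) / (4*c))^5 / (90 * 64000)) ((1/3)^(2*5120+2))"

lemma (in chL) deltaL_eq: "deltaL = (exp (-8*c) / (4*c))^5 / (90 * 64000)"
  unfolding deltaL_def rho_def \<beta>_def by (simp add: power_add[symmetric] field_simps)

theorem lemma13:
  fixes c :: real
  assumes "c \<ge> 1"
  shows "\<exists>C>0. \<forall>(n::nat) (U::nat). n \<ge> 3 \<longrightarrow> U \<ge> 3 \<longrightarrow>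
           real n / c \<le> real U \<longrightarrow> real U \<le> c * real n \<longrightarrow>
           (\<forall>(z0 :: (nat \<times> bool) \<Rightarrow> real) (F::real).
              (\<forall>x\<in>states n. z0 x \<ge> 0) \<longrightarrow> F = (\<Sum>x\<in>states n. z0 x) \<longrightarrow> F > 0 \<longrightarrow>
              (\<forall>eps::real. 0 < eps \<longrightarrow> eps \<le> 1/2 \<longrightarrow>
                 (\<forall>t::nat. real t \<ge> C * real n * ln (real n / eps) \<longrightarrow>
                    (\<forall>x\<in>states n.
                       \<bar>evolve n U z0 t x - stat_dist n U x * F\<bar> \<le> eps / (2 * real n) * F))))"
proof -
  have d0pos: "d0 c > 0" unfolding d0_def using assms by simp
  define C where "C = 4 * (2 / d0 c + 1)"
  have Cpos: "C > 0" unfolding C_def using d0pos by (simp add: add_pos_pos)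
  show ?thesis
  proof (rule exI[of _ C], intro conjI allI impI ballI)
    show "C > 0" by (rule Cpos)
    fix n U :: nat and z0 :: "nat \<times> bool \<Rightarrow> real" and F eps :: real and t :: nat and x
    assume n3: "n \<ge> 3" and U3: "U \<ge> 3" and Ulo: "real n / c \<le> real U" and Uhi: "real U \<le> c * real n"
      and z: "\<forall>x\<in>states n. z0 x \<ge> 0" and F: "F = (\<Sum>x\<in>states n. z0 x)" and Fp: "F > 0"
      and e1: "0 < eps" and e2: "eps \<le> 1/2" and t: "real t \<ge> C * real n * ln (real n / eps)"
      and x: "x \<in> states n"
    interpret ch n U using n3 U3 by unfold_locales
    have tC: "real t \<ge> (4 * (2 / d0 c + 1)) * real n * ln (real n / eps)" using t by (simp add: C_def)
    show "\<bar>evolve n U z0 t x - stat_dist n U x * F\<bar> \<le> eps / (2 * real n) * F"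
    proof (cases "n \<ge> 5120")
      case True
      interpret chL n U c using assms Ulo Uhi True by unfold_locales auto
      have q1: "153 * q \<ge> 1" using qf by linarith
      have T4: "real (153*q) \<le> 4 * real n" using qf by linarith
      have dl: "d0 c \<le> deltaL" unfolding deltaL_eq d0_def by simp
      show ?thesis
        by (rule final_bound[OF doeblin_large q1 T4 d0pos dl z F Fp e1 e2 tC x])
    next
      case False
      have q1: "2*n+2 \<ge> 1" by simp
      have T4: "real (2*n+2) \<le> 4 * real n" using n3 by simp
      have dl: "d0 c \<le> (1/3)^(2*n+2)"
      proof -
        have "(1/3::real)^(2*5120+2) \<le> (1/3)^(2*n+2)" using False by (intro power_decreasing) auto
        then show ?thesis unfolding d0_def by linarith
      qed
      show ?thesis
        by (rule final_bound[OF doeblin_small q1 T4 d0pos dl z F Fp e1 e2 tC x])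
    qed
  qed
qed


end
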